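(* Let $\alpha,\beta>0$, let $n$ be a positive integer, $0<k\le n-1$ an integer, and $g\in H(\mathbb{D})$. Let $I_g^{n,k}f=I^n(f^{(k)}g)$. Then (i) $I_g^{n,k}:\mathcal{B}^{\alpha}\to\mathcal{B}^{\beta}$ is bounded if and only if $\sup_{z\in\mathbb{D}}(1-|z|^2)^{n-k+\beta-\alpha}|g(z)|<\infty$; (ii) $I_g^{n,k}:\mathcal{B}^{\alpha}\to\mathcal{B}^{\beta}$ is compact if and only if $\lim_{|z|\to1^-}(1-|z|^2)^{n-k+\beta-\alpha}|g(z)|=0$.
   Context: $\mathbb{D}$ is the open unit disc in $\mathbb{C}$ and $H(\mathbb{D})$ the space of analytic functions on $\mathbb{D}$. For $\alpha>0$, $\mathcal{B}^{\alpha}$ is the Banach space of $f\in H(\mathbb{D})$ with $\|f\|_{\mathcal{B}^{\alpha}}=|f(0)|+\sup_{z\in\mathbb{D}}(1-|z|^2)^{\alpha}|f'(z)|<\infty$. $I$ is the integration operator $If(z)=\int_0^z f(\zeta)\,d\zeta$ and $I^n$ its $n$th iterate. An operator is bounded (compact) from $\mathcal{B}^\alpha$ to $\mathcal{B}^\beta$ if it maps $\mathcal{B}^\alpha$ into $\mathcal{B}^\beta$ and is bounded (compact) as a linear operator between these Banach spaces. *)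

theory Defs
  imports "HOL-Complex_Analysis.Complex_Analysis"
begin

definition unit_disc :: "complex set" where
  "unit_disc = ball 0 1"

text \<open>The Bloch-type space B^alpha (as a set of functions; only values on the disc matter).\<close>
definition bloch_space :: "real \<Rightarrow> (complex \<Rightarrow> complex) set" where
  "bloch_space \<alpha> = {f. f holomorphic_on unit_disc \<and>
     (\<exists>C. \<forall>z\<in>unit_disc. (1 - (cmod z)^2) powr \<alpha> * cmod (deriv f z) \<le> C)}"

definition bloch_norm :: "real \<Rightarrow> (complex \<Rightarrow> complex) \<Rightarrow> real" where
  "bloch_norm \<alpha> f = cmod (f 0) +
     (SUP z\<in>unit_disc. (1 - (cmod z)^2) powr \<alpha> * cmod (deriv f z))"

definition integ_op :: "(complex \<Rightarrow> complex) \<Rightarrow> complex \<Rightarrow> complex" where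
  "integ_op f z = contour_integral (linepath 0 z) f"

definition Ignk :: "(complex \<Rightarrow> complex) \<Rightarrow> nat \<Rightarrow> nat \<Rightarrow> (complex \<Rightarrow> complex) \<Rightarrow> complex \<Rightarrow> complex" where
  "Ignk g n k f = (integ_op ^^ n) (\<lambda>z. (deriv ^^ k) f z * g z)"

definition bounded_bloch_op :: "real \<Rightarrow> real \<Rightarrow> ((complex \<Rightarrow> complex) \<Rightarrow> complex \<Rightarrow> complex) \<Rightarrow> bool" where
  "bounded_bloch_op \<alpha> \<beta> T \<longleftrightarrow>
     (\<forall>f\<in>bloch_space \<alpha>. T f \<in> bloch_space \<beta>) \<and>
     (\<exists>C. \<forall>f\<in>bloch_space \<alpha>. bloch_norm \<beta> (T f) \<le> C * bloch_norm \<alpha> f)"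

definition compact_bloch_op :: "real \<Rightarrow> real \<Rightarrow> ((complex \<Rightarrow> complex) \<Rightarrow> complex \<Rightarrow> complex) \<Rightarrow> bool" where
  "compact_bloch_op \<alpha> \<beta> T \<longleftrightarrow>
     (\<forall>f\<in>bloch_space \<alpha>. T f \<in> bloch_space \<beta>) \<and>
     (\<forall>fs :: nat \<Rightarrow> complex \<Rightarrow> complex. (\<forall>j. fs j \<in> bloch_space \<alpha>) \<longrightarrow>
        (\<exists>M. \<forall>j. bloch_norm \<alpha> (fs j) \<le> M) \<longrightarrow>
        (\<exists>r h. strict_mono r \<and> h \<in> bloch_space \<beta> \<and>
           (\<lambda>j. bloch_norm \<beta> (\<lambda>z. T (fs (r j)) z - h z)) \<longlonglongrightarrow> 0))"

end

theory Submission
  imports Defs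
begin

lemma disc_segment: "z \<in> unit_disc \<Longrightarrow> closed_segment 0 z \<subseteq> unit_disc"
  unfolding unit_disc_def by (simp add: closed_segment_subset)

lemma integ_op_has_deriv:
  assumes "u holomorphic_on unit_disc" "z \<in> unit_disc"
  shows "(integ_op u has_field_derivative u z) (at z)"
proof -
  have op: "open unit_disc" "convex unit_disc" "0 \<in> unit_disc" unfolding unit_disc_def by auto
  have c: "continuous_on unit_disc u" using assms(1) holomorphic_on_imp_continuous_on by blast
  have "((\<lambda>x. contour_integral(linepath 0 x) u) has_field_derivative u z) (at z within unit_disc)"
  proof (rule triangle_contour_integrals_convex_primitive[OF c op(3) op(2) assms(2)])
    fix b c assume bc: "b \<in> unit_disc" "c \<in> unit_disc"
    have "convex hull {0, b, c} \<subseteq> unit_disc"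
      using bc op by (simp add: hull_minimal)
    then have "u holomorphic_on convex hull {0,b,c}" using assms(1) holomorphic_on_subset by blast
    then show "contour_integral (linepath 0 b) u + contour_integral (linepath b c) u +
                       contour_integral (linepath c 0) u = 0"
      using Cauchy_theorem_triangle has_chain_integral_chain_integral3 by blast
  qed
  then show ?thesis using op(1) assms(2) at_within_open unfolding integ_op_def[abs_def] by fastforce
qed

lemma integ_op_holo:
  assumes "u holomorphic_on unit_disc"
  shows "integ_op u holomorphic_on unit_disc"
  using integ_op_has_deriv[OF assms] unfolding unit_disc_def
  by (meson holomorphic_on_open open_ball)

lemma iter_holo:
  assumes "u holomorphic_on unit_disc"
  shows "(integ_op ^^ j) u holomorphic_on unit_disc"
  by (induction j) (auto simp: assms integ_op_holo)

lemma iter_deriv: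
  assumes "u holomorphic_on unit_disc" "z \<in> unit_disc"
  shows "deriv ((integ_op ^^ Suc j) u) z = (integ_op ^^ j) u z"
  by (simp add: DERIV_imp_deriv[OF integ_op_has_deriv[OF iter_holo[OF assms(1)] assms(2)]])

lemma iter_has_deriv:
  assumes "u holomorphic_on unit_disc" "z \<in> unit_disc"
  shows "((integ_op ^^ Suc j) u has_field_derivative (integ_op ^^ j) u z) (at z)"
  using integ_op_has_deriv[OF iter_holo[OF assms(1)] assms(2)] by simp

lemma iter_zero: "(integ_op ^^ Suc j) u 0 = 0"
  by (simp add: integ_op_def)

lemma integ_op_cong:
  assumes "\<And>w. w \<in> unit_disc \<Longrightarrow> u w = v w" "z \<in> unit_disc"
  shows "integ_op u z = integ_op v z"
  unfolding integ_op_def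
  by (rule contour_integral_eq) (use assms disc_segment in auto)

lemma iter_cong:
  assumes "\<And>w. w \<in> unit_disc \<Longrightarrow> u w = v w" "z \<in> unit_disc"
  shows "(integ_op ^^ j) u z = (integ_op ^^ j) v z"
  using assms(2)
proof (induction j arbitrary: z)
  case 0 then show ?case using assms(1)[of z] by simp
next
  case (Suc j) then show ?case using integ_op_cong[OF Suc.IH Suc.prems] by simp
qed

lemma iter_diff:
  assumes "u holomorphic_on unit_disc" "v holomorphic_on unit_disc" "z \<in> unit_disc"
  shows "(integ_op ^^ j) (\<lambda>w. u w - v w) z = (integ_op ^^ j) u z - (integ_op ^^ j) v z"
  using assms(3)
proof (induction j arbitrary: z)
  case 0 then show ?case by simp
next
  case (Suc j)
  have op: "open unit_disc" unfolding unit_disc_def by auto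
  have "(integ_op ^^ Suc j) (\<lambda>w. u w - v w) z = integ_op (\<lambda>w. (integ_op ^^ j) u w - (integ_op ^^ j) v w) z"
    using integ_op_cong[OF Suc.IH Suc.prems] by simp
  also have "\<dots> = integ_op ((integ_op ^^ j) u) z - integ_op ((integ_op ^^ j) v) z"
    unfolding integ_op_def[of "\<lambda>w. (integ_op ^^ j) u w - (integ_op ^^ j) v w"]
      integ_op_def[of "(integ_op ^^ j) u"] integ_op_def[of "(integ_op ^^ j) v"]
    by (rule contour_integral_diff; rule contour_integrable_holomorphic_simple[OF _ op])
       (use iter_holo assms Suc.prems disc_segment in auto)
  also have "\<dots> = (integ_op ^^ Suc j) u z - (integ_op ^^ Suc j) v z" by simp
  finally show ?case .
qed

lemma iter_local_bound:
  assumes "u holomorphic_on unit_disc" "r < 1" "\<And>w. cmod w \<le> r \<Longrightarrow> cmod (u w) \<le> \<delta>"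
    "cmod z \<le> r" "0 \<le> \<delta>"
  shows "cmod ((integ_op ^^ j) u z) \<le> \<delta>"
  using assms(4)
proof (induction j arbitrary: z)
  case 0 then show ?case using assms(3) by simp
next
  case (Suc j)
  have op: "open unit_disc" unfolding unit_disc_def by auto
  have zD: "z \<in> unit_disc" using Suc.prems assms(2) unfolding unit_disc_def by auto
  have "((integ_op ^^ j) u has_contour_integral integ_op ((integ_op ^^ j) u) z) (linepath 0 z)"
    unfolding integ_op_def[of "(integ_op ^^ j) u"]
    by (rule has_contour_integral_integral, rule contour_integrable_holomorphic_simple[OF iter_holo[OF assms(1)] op])
       (use zD disc_segment in auto)
  then have "((integ_op ^^ j) u has_contour_integral (integ_op ^^ Suc j) u z) (linepath 0 z)" by simp
  then have "cmod ((integ_op ^^ Suc j) u z) \<le> \<delta> * cmod (z - 0)"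
  proof (rule has_contour_integral_bound_linepath[OF _ assms(5)])
    fix x assume "x \<in> closed_segment 0 z"
    then have "cmod x \<le> cmod z" using segment_bound(1)[of x 0 z] by simp
    then show "cmod ((integ_op ^^ j) u x) \<le> \<delta>" using Suc.IH Suc.prems by auto
  qed
  also have "\<dots> \<le> \<delta>" using zD assms(5) unfolding unit_disc_def
    by (simp add: mult_left_le)
  finally show ?case .
qed

lemma integ_growth:
  assumes u: "u holomorphic_on unit_disc" and g: "\<gamma> > 1" and M: "M \<ge> 0"
    and b: "\<And>w. w \<in> unit_disc \<Longrightarrow> cmod (u w) \<le> M * (1 - cmod w) powr (-\<gamma>)"
    and z: "z \<in> unit_disc"
  shows "cmod (integ_op u z) \<le> M / (\<gamma> - 1) * (1 - cmod z) powr (-(\<gamma> - 1))"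
proof -
  define F where "F = integ_op u"
  define f where "f t = F (of_real t * z)" for t :: real
  define \<phi> where "\<phi> t = M / (\<gamma> - 1) * (1 - t * cmod z) powr (1 - \<gamma>)" for t :: real
  have zn: "cmod z < 1" using z by (simp add: unit_disc_def)
  have tz: "of_real t * z \<in> unit_disc" if "0 \<le> t" "t \<le> 1" for t
  proof -
    have "cmod (of_real t * z) = t * cmod z" using that by (simp add: norm_mult)
    also have "\<dots> \<le> cmod z" using that by (simp add: mult_left_le_one_le)
    finally show ?thesis using zn by (simp add: unit_disc_def)
  qed
  have pos: "0 < 1 - t * cmod z" if "t \<le> 1" "0 \<le> t" for t
  proof -
    have "t * cmod z \<le> cmod z" using that by (simp add: mult_left_le_one_le)
    then show ?thesis using zn by linarith
  qed
  have Fd: "(F has_field_derivative u w) (at w)" if "w \<in> unit_disc" for w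
    unfolding F_def using integ_op_has_deriv[OF u that] .
  have Fc: "continuous_on unit_disc F"
    unfolding F_def using integ_op_holo[OF u] holomorphic_on_imp_continuous_on by blast
  have "norm (f 1 - f 0) \<le> \<phi> 1 - \<phi> 0"
  proof (rule differentiable_bound_general[of 0 1 f \<phi> "\<lambda>t. z * u (of_real t * z)"
        "\<lambda>t. M * cmod z * (1 - t * cmod z) powr (-\<gamma>)"])
    show "continuous_on {0..1} f" unfolding f_def
      by (rule continuous_on_compose2[OF Fc]) (auto intro!: continuous_intros tz)
    show "continuous_on {0..1} \<phi>" unfolding \<phi>_def
      apply (intro continuous_intros)
      using pos by (metis atLeastAtMost_iff less_irrefl)+
    fix t :: real assume t: "0 < t" "t < 1"
    have "((\<lambda>t. of_real t * z) has_vector_derivative z) (at t)"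
      by (rule has_vector_derivative_real_field[where f="\<lambda>w. w * z"])
         (auto intro!: derivative_eq_intros)
    from field_vector_diff_chain_at[OF this Fd[OF tz]] t
    show "(f has_vector_derivative z * u (of_real t * z)) (at t)"
      unfolding f_def comp_def by simp
    have "(\<phi> has_real_derivative M * cmod z * (1 - t * cmod z) powr (-\<gamma>)) (at t)"
      unfolding \<phi>_def
      apply (rule derivative_eq_intros refl | use pos t in force)+
      using g pos[of t] t apply (simp add: field_simps powr_diff)
      done
    then show "(\<phi> has_vector_derivative M * cmod z * (1 - t * cmod z) powr (-\<gamma>)) (at t)"
      by (simp add: has_real_derivative_iff_has_vector_derivative)
    have "cmod (z * u (of_real t * z)) = cmod z * cmod (u (of_real t * z))" by (simp add: norm_mult)
    also have "\<dots> \<le> cmod z * (M * (1 - cmod (of_real t * z)) powr (-\<gamma>))"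
      by (rule mult_left_mono[OF b[OF tz]]) (use t in auto)
    also have "cmod (of_real t * z) = t * cmod z" using t by (simp add: norm_mult)
    finally show "cmod (z * u (of_real t * z)) \<le> M * cmod z * (1 - t * cmod z) powr (-\<gamma>)"
      by (simp add: mult_ac)
  qed simp
  moreover have "f 0 = 0" unfolding f_def F_def by (simp add: integ_op_def)
  moreover have "f 1 = integ_op u z" unfolding f_def F_def by simp
  moreover have "\<phi> 0 \<ge> 0" unfolding \<phi>_def using M g by simp
  moreover have "\<phi> 1 = M / (\<gamma> - 1) * (1 - cmod z) powr (-(\<gamma> - 1))" unfolding \<phi>_def by simp
  ultimately show ?thesis by simp
qed

lemma disc_norm: "z \<in> unit_disc \<longleftrightarrow> cmod z < 1" by (simp add: unit_disc_def)

lemma ne_one_plus: "1 + cmod w \<noteq> 0" by (smt (verit) norm_ge_zero)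

lemma one_plus_powr_le: "(1 + cmod w) powr t \<le> 2 powr \<bar>t\<bar>" if "cmod w < 1" for w :: complex
proof (cases "t \<ge> 0")
  case True
  then have "(1 + cmod w) powr t \<le> 2 powr t" using that by (intro powr_mono2) auto
  then show ?thesis using True by simp
next
  case False
  then have "(1 + cmod w) powr t \<le> 1" using powr_mono[of t 0 "1 + cmod w"] ne_one_plus by simp
  also have "1 \<le> 2 powr \<bar>t\<bar>" using ge_one_powr_ge_zero[of 2 "\<bar>t\<bar>"] by simp
  finally show ?thesis .
qed

lemma weight_conv1:
  assumes "cmod w < 1"
  shows "(1 - cmod w ^ 2) powr s \<le> 2 powr \<bar>s\<bar> * (1 - cmod w) powr s"
proof -
  have "1 - cmod w ^ 2 = (1 - cmod w) * (1 + cmod w)" by (simp add: power2_eq_square algebra_simps)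
  then have "(1 - cmod w ^ 2) powr s = (1 - cmod w) powr s * (1 + cmod w) powr s"
    using assms by (simp add: powr_mult)
  also have "\<dots> \<le> (1 - cmod w) powr s * 2 powr \<bar>s\<bar>"
    by (rule mult_left_mono[OF one_plus_powr_le[OF assms]]) simp
  finally show ?thesis by (simp add: mult_ac)
qed

lemma weight_conv2:
  assumes "cmod w < 1"
  shows "(1 - cmod w) powr s \<le> 2 powr \<bar>s\<bar> * (1 - cmod w ^ 2) powr s"
proof -
  have e: "1 - cmod w ^ 2 = (1 - cmod w) * (1 + cmod w)" by (simp add: power2_eq_square algebra_simps)
  have p: "(1 + cmod w) powr s * (1 + cmod w) powr (-s) = 1"
    by (simp add: powr_add[symmetric] ne_one_plus)
  have "(1 - cmod w ^ 2) powr s * (1 + cmod w) powr (-s)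
      = (1 - cmod w) powr s * ((1 + cmod w) powr s * (1 + cmod w) powr (-s))"
    unfolding e using assms by (simp add: powr_mult)
  then have "(1 - cmod w) powr s = (1 - cmod w ^ 2) powr s * (1 + cmod w) powr (-s)"
    using p by (simp add: ne_one_plus)
  also have "\<dots> \<le> (1 - cmod w ^ 2) powr s * 2 powr \<bar>s\<bar>"
    using mult_left_mono[OF one_plus_powr_le[OF assms, of "-s"], of "(1 - cmod w ^ 2) powr s"] by simp
  finally show ?thesis by (simp add: mult_ac)
qed

lemma cauchy_growth:
  assumes h: "h holomorphic_on unit_disc" and g: "\<gamma> \<ge> 0"
    and b: "\<And>w. w \<in> unit_disc \<Longrightarrow> cmod (h w) \<le> M * (1 - cmod w) powr (-\<gamma>)"
    and z: "z \<in> unit_disc"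
  shows "cmod ((deriv ^^ m) h z) \<le> fact m * M * 2 powr (\<gamma> + m) * (1 - cmod z) powr (-(\<gamma> + m))"
proof -
  define \<rho> where "\<rho> = (1 - cmod z) / 2"
  have zn: "cmod z < 1" using z by (simp add: unit_disc_def)
  have rp: "\<rho> > 0" using zn by (simp add: \<rho>_def)
  have M: "M \<ge> 0"
  proof -
    have "0 \<le> M * (1 - cmod z) powr (-\<gamma>)" using b[OF z] norm_ge_zero order_trans by blast
    moreover have "(1 - cmod z) powr (-\<gamma>) > 0" using zn by simp
    ultimately show ?thesis by (simp add: zero_le_mult_iff)
  qed
  have nx: "cmod x \<le> cmod z + \<rho>" if "x \<in> cball z \<rho>" for x
  proof -
    have "cmod x \<le> cmod z + cmod (x - z)" using norm_triangle_ineq2[of x z] by simp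
    then show ?thesis using that by (simp add: dist_norm norm_minus_commute)
  qed
  have sub: "cball z \<rho> \<subseteq> unit_disc"
  proof
    fix x assume xc: "x \<in> cball z \<rho>"
    have "cmod z + \<rho> < 1" using zn by (simp add: \<rho>_def field_simps)
    with nx[OF xc] show "x \<in> unit_disc" unfolding disc_norm by linarith
  qed
  have bd: "cmod (h x) \<le> M * \<rho> powr (-\<gamma>)" if "norm (z - x) = \<rho>" for x
  proof -
    have xc: "x \<in> cball z \<rho>" using that by (simp add: dist_norm)
    have xD: "x \<in> unit_disc" using sub xc by auto
    have "\<rho> \<le> 1 - cmod x" using nx[OF xc] unfolding \<rho>_def by (simp add: field_simps)
    then have "(1 - cmod x) powr (-\<gamma>) \<le> \<rho> powr (-\<gamma>)" using powr_mono2'[of "-\<gamma>" \<rho> "1 - cmod x"] rp g by auto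
    then show ?thesis using b[OF xD] M by (meson mult_left_mono order_trans)
  qed
  have two: "2 powr (\<gamma> + m) * 2 powr (-\<gamma> - m) = 1" by (simp add: powr_add[symmetric])
  have "cmod ((deriv ^^ m) h z) \<le> fact m * (M * \<rho> powr (-\<gamma>)) / \<rho>^m"
    by (rule Cauchy_inequality[OF holomorphic_on_subset[OF h]
          holomorphic_on_imp_continuous_on[OF holomorphic_on_subset[OF h sub]] rp bd])
       (use sub ball_subset_cball in auto)
  also have "\<dots> = fact m * M * (\<rho> powr (-\<gamma>) / \<rho> powr (real m))"
    using rp by (simp add: powr_realpow)
  also have "\<rho> powr (-\<gamma>) / \<rho> powr (real m) = \<rho> powr (-(\<gamma> + m))"
    by (simp add: powr_diff[symmetric])
  also have "\<rho> powr (-(\<gamma> + m)) = 2 powr (\<gamma> + m) * (1 - cmod z) powr (-(\<gamma> + m))"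
    unfolding \<rho>_def using zn two by (simp add: powr_divide powr_minus divide_simps)
  finally show ?thesis by (simp add: mult_ac)
qed

lemma deriv_inv_pow:
  fixes b z :: complex
  assumes nz: "1 - b * z \<noteq> 0"
  shows "((\<lambda>w. inverse ((1 - b * w) ^ N)) has_field_derivative
            (of_nat N * b * inverse ((1 - b * z) ^ Suc N))) (at z)"
proof -
  have d1: "((\<lambda>w. 1 - b * w) has_field_derivative (0 - b * 1)) (at z)"
    by (intro DERIV_diff DERIV_const DERIV_cmult DERIV_ident)
  have d2: "((\<lambda>w. (1 - b * w) ^ N) has_field_derivative
        of_nat N * ((0 - b * 1) * (1 - b * z) ^ (N - Suc 0))) (at z)"
    using DERIV_power[OF d1, of N] .
  have nzN: "(1 - b * z) ^ N \<noteq> 0" using nz by simp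
  note d3 = DERIV_inverse'[OF d2 nzN]
  have eq: "- (inverse ((1 - b * z) ^ N) * (of_nat N * ((0 - b * 1) * (1 - b * z) ^ (N - Suc 0)))
            * inverse ((1 - b * z) ^ N)) = of_nat N * b * inverse ((1 - b * z) ^ Suc N)"
  proof (cases N)
    case 0 then show ?thesis by simp
  next
    case (Suc N')
    have gen: "- (inverse (p ^ Suc N') * (of_nat (Suc N') * ((0 - b * 1) * p ^ (Suc N' - Suc 0))) * inverse (p ^ Suc N'))
       = of_nat (Suc N') * b * inverse (p ^ Suc (Suc N'))" if "p \<noteq> 0" for p :: complex
      using that by (simp add: field_simps power_Suc)
    show ?thesis using gen[OF nz] Suc by simp
  qed
  show ?thesis using d3 unfolding eq .
qed

lemma higher_deriv_pole:
  fixes b c z :: complex and m :: nat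
  assumes "b * z \<noteq> 1"
  shows "(deriv ^^ k) (\<lambda>w. c * inverse ((1 - b * w) ^ m)) z
       = c * pochhammer (of_nat m) k * b ^ k * inverse ((1 - b * z) ^ (m + k))"
  using assms
proof (induction k arbitrary: z)
  case 0 then show ?case by simp
next
  case (Suc k)
  have op: "open {w. b * w \<noteq> 1}"
    by (rule open_Collect_neq) (auto intro!: continuous_intros)
  have ev: "eventually (\<lambda>w. b * w \<noteq> 1) (nhds z)"
    using eventually_nhds_in_open[OF op] Suc.prems by auto
  have "(deriv ^^ Suc k) (\<lambda>w. c * inverse ((1 - b * w) ^ m)) z
      = deriv (\<lambda>w. c * pochhammer (of_nat m) k * b ^ k * inverse ((1 - b * w) ^ (m + k))) z"
    unfolding funpow.simps comp_def
    by (rule deriv_cong_ev[OF _ refl]) (use ev Suc.IH in \<open>auto elim!: eventually_mono\<close>)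
  also have "\<dots> = c * pochhammer (of_nat m) (Suc k) * b ^ Suc k * inverse ((1 - b * z) ^ (m + Suc k))"
  proof (rule DERIV_imp_deriv)
    have nz: "1 - b * z \<noteq> 0" using Suc.prems by auto
    show "((\<lambda>w. c * pochhammer (of_nat m) k * b ^ k * inverse ((1 - b * w) ^ (m + k))) has_field_derivative
        c * pochhammer (of_nat m) (Suc k) * b ^ Suc k * inverse ((1 - b * z) ^ (m + Suc k))) (at z)"
      using DERIV_cmult[OF deriv_inv_pow[OF nz, of "m + k"], of "c * pochhammer (of_nat m) k * b ^ k"]
      by (simp add: pochhammer_rec' mult_ac)
  qed
  finally show ?case .
qed

lemma disc_sq: "cmod v < 1 \<Longrightarrow> 0 < 1 - cmod v ^ 2"
proof -
  assume "cmod v < 1"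
  then have "cmod v ^ 2 < 1 ^ 2" by (intro power_strict_mono) auto
  then show ?thesis by simp
qed

lemma bloch_norm_le:
  assumes "\<And>w. w \<in> unit_disc \<Longrightarrow> (1 - cmod w ^ 2) powr \<alpha> * cmod (deriv f w) \<le> B"
  shows "bloch_norm \<alpha> f \<le> cmod (f 0) + B" "0 \<le> bloch_norm \<alpha> f"
proof -
  have ne: "unit_disc \<noteq> {}" unfolding unit_disc_def by auto
  have "(SUP z\<in>unit_disc. (1 - (cmod z)^2) powr \<alpha> * cmod (deriv f z)) \<le> B"
    by (rule cSUP_least[OF ne assms])
  then show "bloch_norm \<alpha> f \<le> cmod (f 0) + B" unfolding bloch_norm_def by simp
  have z: "0 \<in> unit_disc" unfolding unit_disc_def by auto
  have "0 \<le> (1 - (cmod 0)^2) powr \<alpha> * cmod (deriv f 0)" by simp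
  also have "\<dots> \<le> (SUP z\<in>unit_disc. (1 - (cmod z)^2) powr \<alpha> * cmod (deriv f z))"
    by (rule cSUP_upper[OF z], rule bdd_aboveI2[where M=B], rule assms)
  finally show "0 \<le> bloch_norm \<alpha> f" unfolding bloch_norm_def by simp
qed

lemma bloch_deriv_le:
  assumes "f \<in> bloch_space \<alpha>" "w \<in> unit_disc"
  shows "(1 - cmod w ^ 2) powr \<alpha> * cmod (deriv f w) \<le> bloch_norm \<alpha> f - cmod (f 0)"
proof -
  obtain C where C: "\<forall>z\<in>unit_disc. (1 - (cmod z)^2) powr \<alpha> * cmod (deriv f z) \<le> C"
    using assms(1) unfolding bloch_space_def by blast
  have "(1 - cmod w ^ 2) powr \<alpha> * cmod (deriv f w) \<le> (SUP z\<in>unit_disc. (1 - (cmod z)^2) powr \<alpha> * cmod (deriv f z))"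
    by (rule cSUP_upper[OF assms(2)], rule bdd_aboveI2[where M=C]) (use C in blast)
  then show ?thesis unfolding bloch_norm_def by simp
qed

lemma bloch_norm_nonneg:
  assumes "f \<in> bloch_space \<alpha>"
  shows "cmod (f 0) \<le> bloch_norm \<alpha> f"
  using bloch_deriv_le[OF assms, of 0] unfolding unit_disc_def
  by (smt (verit) centre_in_ball mult_nonneg_nonneg norm_ge_zero powr_ge_zero zero_less_one)

lemma bloch_growth:
  assumes f: "f \<in> bloch_space \<alpha>" and a: "\<alpha> > 0" and k: "k \<ge> 1" and w: "w \<in> unit_disc"
  shows "cmod ((deriv ^^ k) f w)
     \<le> fact (k - 1) * 2 powr \<alpha> * 2 powr (\<alpha> + real (k - 1)) * bloch_norm \<alpha> f
        * (1 - cmod w) powr (-(\<alpha> + real (k - 1)))"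
proof -
  define S where "S = bloch_norm \<alpha> f"
  have S0: "S \<ge> 0" unfolding S_def using bloch_norm_nonneg[OF f] norm_ge_zero order_trans by blast
  have holf: "f holomorphic_on unit_disc" using f unfolding bloch_space_def by auto
  have op: "open unit_disc" unfolding unit_disc_def by simp
  have hold: "deriv f holomorphic_on unit_disc" using holomorphic_deriv[OF holf op] .
  have b: "cmod (deriv f v) \<le> (S * 2 powr \<alpha>) * (1 - cmod v) powr (-\<alpha>)" if v: "v \<in> unit_disc" for v
  proof -
    have vn: "cmod v < 1" using v by (simp add: disc_norm)
    have pos: "(1 - cmod v ^ 2) powr \<alpha> > 0" using disc_sq[OF vn] by simp
    have "(1 - cmod v ^ 2) powr \<alpha> * cmod (deriv f v) \<le> S"
      using bloch_deriv_le[OF f v] norm_ge_zero[of "f 0"] unfolding S_def by linarith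
    then have "cmod (deriv f v) \<le> S * (1 - cmod v ^ 2) powr (-\<alpha>)"
      using pos by (simp add: powr_minus field_simps)
    also have "\<dots> \<le> S * (2 powr \<bar>-\<alpha>\<bar> * (1 - cmod v) powr (-\<alpha>))"
      by (rule mult_left_mono[OF weight_conv1[OF vn] S0])
    finally show ?thesis using a by (simp add: mult_ac)
  qed
  have "cmod ((deriv ^^ (k - 1)) (deriv f) w)
      \<le> fact (k - 1) * (S * 2 powr \<alpha>) * 2 powr (\<alpha> + real (k - 1)) * (1 - cmod w) powr (-(\<alpha> + real (k - 1)))"
    by (rule cauchy_growth[OF hold _ b w]) (use a in auto)
  moreover have "(deriv ^^ (k - 1)) (deriv f) = (deriv ^^ k) f"
  proof -
    have "(deriv ^^ k) f = (deriv ^^ Suc (k - 1)) f" using k by simp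
    also have "\<dots> = (deriv ^^ (k - 1)) (deriv f)" by (simp only: funpow_Suc_right[of "k - 1" deriv] comp_def)
    finally show ?thesis by simp
  qed
  ultimately show ?thesis unfolding S_def by (simp add: mult_ac)
qed

fun Kint :: "real \<Rightarrow> nat \<Rightarrow> real" where
  "Kint \<gamma> 0 = 1"
| "Kint \<gamma> (Suc j) = Kint \<gamma> j / (\<gamma> - real j - 1)"

lemma Kint_pos: "\<gamma> > real j \<Longrightarrow> Kint \<gamma> j > 0"
  by (induction j) auto

lemma iter_growth:
  assumes u: "u holomorphic_on unit_disc" and M: "M \<ge> 0" and g: "\<gamma> > real j"
    and b: "\<And>w. w \<in> unit_disc \<Longrightarrow> cmod (u w) \<le> M * (1 - cmod w) powr (-\<gamma>)"
    and z: "z \<in> unit_disc"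
  shows "cmod ((integ_op ^^ j) u z) \<le> Kint \<gamma> j * M * (1 - cmod z) powr (-(\<gamma> - real j))"
  using g z
proof (induction j arbitrary: z)
  case 0 then show ?case using b by simp
next
  case (Suc j)
  have g1: "\<gamma> > real j" "\<gamma> - real j > 1" using Suc.prems by auto
  have K0: "Kint \<gamma> j * M \<ge> 0" using Kint_pos[OF g1(1)] M by simp
  have A: "cmod (integ_op ((integ_op ^^ j) u) z)
      \<le> (Kint \<gamma> j * M) / ((\<gamma> - real j) - 1) * (1 - cmod z) powr (-((\<gamma> - real j) - 1))"
    by (rule integ_growth[OF iter_holo[OF u] g1(2) K0 _ Suc.prems(2)]) (use Suc.IH g1 in auto)
  have B: "(1 - cmod z) powr (-((\<gamma> - real j) - 1)) = (1 - cmod z) powr (-(\<gamma> - real (Suc j)))"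
    by (rule arg_cong[where f="\<lambda>x. (1 - cmod z) powr x"]) simp
  have C: "(Kint \<gamma> j * M) / ((\<gamma> - real j) - 1) = Kint \<gamma> (Suc j) * M"
    using g1 by (simp add: field_simps)
  show ?case using A unfolding B C by simp
qed

lemma forward:
  assumes u: "u holomorphic_on unit_disc" and M: "M \<ge> 0" and \<beta>: "\<beta> > 0" and n: "n \<ge> 1"
    and b: "\<And>w. w \<in> unit_disc \<Longrightarrow> cmod (u w) \<le> M * (1 - cmod w) powr (-(real n - 1 + \<beta>))"
  shows "(integ_op ^^ n) u \<in> bloch_space \<beta>"
        "bloch_norm \<beta> ((integ_op ^^ n) u) \<le> 2 powr \<beta> * Kint (real n - 1 + \<beta>) (n - 1) * M"
proof -
  define H where "H = (integ_op ^^ n) u"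
  define K where "K = Kint (real n - 1 + \<beta>) (n - 1)"
  have nn: "n = Suc (n - 1)" using n by simp
  have d: "deriv H w = (integ_op ^^ (n - 1)) u w" if "w \<in> unit_disc" for w
    unfolding H_def using iter_deriv[OF u that, of "n - 1"] nn by simp
  have bd: "(1 - cmod w ^ 2) powr \<beta> * cmod (deriv H w) \<le> 2 powr \<beta> * K * M" if w: "w \<in> unit_disc" for w
  proof -
    have wn: "cmod w < 1" using w by (simp add: disc_norm)
    have "cmod (deriv H w) \<le> K * M * (1 - cmod w) powr (-(real n - 1 + \<beta> - real (n - 1)))"
      unfolding d[OF w] K_def by (rule iter_growth[OF u M _ b w]) (use \<beta> n in auto)
    also have "-(real n - 1 + \<beta> - real (n - 1)) = -\<beta>" using n by (simp add: of_nat_diff)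
    finally have h: "cmod (deriv H w) \<le> K * M * (1 - cmod w) powr (-\<beta>)" .
    have "(1 - cmod w ^ 2) powr \<beta> * cmod (deriv H w)
        \<le> (2 powr \<beta> * (1 - cmod w) powr \<beta>) * (K * M * (1 - cmod w) powr (-\<beta>))"
      by (rule mult_mono) (use weight_conv1[OF wn, of \<beta>] \<beta> h in auto)
    also have "\<dots> = 2 powr \<beta> * K * M * ((1 - cmod w) powr \<beta> * (1 - cmod w) powr (-\<beta>))"
      by (simp add: mult_ac)
    also have "(1 - cmod w) powr \<beta> * (1 - cmod w) powr (-\<beta>) = 1"
      using wn by (simp add: powr_add[symmetric])
    finally show ?thesis by simp
  qed
  have H0: "H 0 = 0" unfolding H_def by (subst nn) (rule iter_zero)
  show "(integ_op ^^ n) u \<in> bloch_space \<beta>" unfolding bloch_space_def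
    using iter_holo[OF u] bd unfolding H_def by blast
  show "bloch_norm \<beta> ((integ_op ^^ n) u) \<le> 2 powr \<beta> * Kint (real n - 1 + \<beta>) (n - 1) * M"
    using bloch_norm_le(1)[OF bd] H0 unfolding K_def H_def by simp
qed

lemma iter_higher_deriv:
  assumes u: "u holomorphic_on unit_disc" and z: "z \<in> unit_disc"
  shows "(deriv ^^ j) ((integ_op ^^ j) u) z = u z"
  using z
proof (induction j arbitrary: z)
  case 0 then show ?case by simp
next
  case (Suc j)
  have op: "open unit_disc" unfolding unit_disc_def by simp
  have "(deriv ^^ Suc j) ((integ_op ^^ Suc j) u) z = (deriv ^^ j) (deriv ((integ_op ^^ Suc j) u)) z"
    by (simp only: funpow_Suc_right[of j deriv] comp_def)
  also have "\<dots> = (deriv ^^ j) ((integ_op ^^ j) u) z"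
  proof (rule higher_deriv_cong_ev[OF _ refl])
    show "\<forall>\<^sub>F x in nhds z. deriv ((integ_op ^^ Suc j) u) x = (integ_op ^^ j) u x"
      using eventually_nhds_in_open[OF op Suc.prems] by (rule eventually_mono) (rule iter_deriv[OF u])
  qed
  also have "\<dots> = u z" using Suc by simp
  finally show ?case .
qed

lemma u_holo:
  assumes "f holomorphic_on unit_disc" "g holomorphic_on unit_disc"
  shows "(\<lambda>z. (deriv ^^ k) f z * g z) holomorphic_on unit_disc"
proof -
  have op: "open unit_disc" unfolding unit_disc_def by simp
  show ?thesis by (intro holomorphic_on_mult holomorphic_higher_deriv[OF assms(1) op] assms(2))
qed

lemma T_deriv:
  assumes "f holomorphic_on unit_disc" "g holomorphic_on unit_disc" "n \<ge> 1" "w \<in> unit_disc"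
  shows "deriv (Ignk g n k f) w = (integ_op ^^ (n - 1)) (\<lambda>z. (deriv ^^ k) f z * g z) w"
proof -
  have nn: "n = Suc (n - 1)" using assms(3) by simp
  show ?thesis unfolding Ignk_def
    using iter_deriv[OF u_holo[OF assms(1,2)] assms(4), of "n - 1" k] nn by simp
qed

lemma T_zero:
  assumes "n \<ge> 1"
  shows "Ignk g n k f 0 = 0"
proof -
  have nn: "n = Suc (n - 1)" using assms by simp
  show ?thesis unfolding Ignk_def by (subst nn) (rule iter_zero)
qed

definition mt :: "real \<Rightarrow> nat" where "mt \<alpha> = nat \<lceil>\<alpha>\<rceil>"

definition tf :: "real \<Rightarrow> complex \<Rightarrow> complex \<Rightarrow> complex" where
  "tf \<alpha> a = (\<lambda>w. of_real ((1 - cmod a ^ 2) powr (real (mt \<alpha>) + 1 - \<alpha>)) * inverse ((1 - cnj a * w) ^ mt \<alpha>))"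

lemma mt_ge:
  assumes "\<alpha> > 0" shows "real (mt \<alpha>) \<ge> \<alpha>" "mt \<alpha> \<ge> 1"
proof -
  have c: "\<lceil>\<alpha>\<rceil> \<ge> 1" using assms by (simp add: one_le_ceiling)
  then have "real (mt \<alpha>) = of_int \<lceil>\<alpha>\<rceil>" unfolding mt_def by simp
  then show "real (mt \<alpha>) \<ge> \<alpha>" by (simp add: le_of_int_ceiling)
  show "mt \<alpha> \<ge> 1" unfolding mt_def using c by (subst le_nat_iff) auto
qed

lemma cnj_mult_ne:
  assumes "a \<in> unit_disc" "w \<in> unit_disc"
  shows "cnj a * w \<noteq> 1"
proof -
  have an: "cmod a < 1" "cmod w < 1" using assms by (auto simp: disc_norm)
  have "cmod a * cmod w \<le> cmod a" by (rule mult_left_le) (use an in auto)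
  then have "cmod (cnj a * w) < 1" using an by (simp add: norm_mult)
  then show ?thesis by auto
qed

lemma tf_holo:
  assumes "a \<in> unit_disc"
  shows "tf \<alpha> a holomorphic_on unit_disc"
  unfolding tf_def
  by (intro holomorphic_intros) (use cnj_mult_ne[OF assms] in auto)

lemma tf_higher_deriv:
  assumes "a \<in> unit_disc" "w \<in> unit_disc"
  shows "(deriv ^^ k) (tf \<alpha> a) w = of_real ((1 - cmod a ^ 2) powr (real (mt \<alpha>) + 1 - \<alpha>))
           * pochhammer (of_nat (mt \<alpha>)) k * cnj a ^ k * inverse ((1 - cnj a * w) ^ (mt \<alpha> + k))"
  unfolding tf_def by (rule higher_deriv_pole) (use cnj_mult_ne[OF assms] in auto)

lemma one_minus_lower:
  assumes "cmod a < 1" "cmod w < 1"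
  shows "1 - cmod a ^ 2 \<le> 2 * cmod (1 - cnj a * w)"
proof -
  have "1 - cmod a * cmod w \<le> cmod (1 - cnj a * w)"
    using norm_triangle_ineq2[of 1 "cnj a * w"] by (simp add: norm_mult)
  moreover have "cmod a * cmod w \<le> cmod a" by (rule mult_left_le) (use assms in auto)
  moreover have "1 - cmod a ^ 2 \<le> 2 * (1 - cmod a)"
  proof -
    have "(1 - cmod a) * (1 + cmod a) \<le> (1 - cmod a) * 2" by (rule mult_left_mono) (use assms in auto)
    then show ?thesis by (simp add: power2_eq_square algebra_simps)
  qed
  ultimately show ?thesis by argo
qed

lemma cmod_swap: "cmod (1 - cnj w * a) = cmod (1 - cnj a * w)"
proof -
  have "1 - cnj w * a = cnj (1 - cnj a * w)" by (simp add: mult.commute)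
  then show ?thesis by (simp only: complex_mod_cnj)
qed

lemma tf_bloch:
  assumes \<alpha>: "\<alpha> > 0" and a: "a \<in> unit_disc"
  shows "tf \<alpha> a \<in> bloch_space \<alpha>" "bloch_norm \<alpha> (tf \<alpha> a) \<le> 1 + real (mt \<alpha>) * 2 ^ (mt \<alpha> + 1)"
proof -
  define m where "m = mt \<alpha>"
  define l where "l = 1 - cmod a ^ 2"
  define t where "t = real m + 1 - \<alpha>"
  have an: "cmod a < 1" using a by (simp add: disc_norm)
  have lp: "l > 0" unfolding l_def using disc_sq[OF an] .
  have l1: "l \<le> 1" unfolding l_def by simp
  have tp: "t > 0" unfolding t_def m_def using mt_ge(1)[OF \<alpha>] by simp
  have bd: "(1 - cmod w ^ 2) powr \<alpha> * cmod (deriv (tf \<alpha> a) w) \<le> real m * 2 ^ (m + 1)"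
    if w: "w \<in> unit_disc" for w
  proof -
    have wn: "cmod w < 1" using w by (simp add: disc_norm)
    define q where "q = cmod (1 - cnj a * w)"
    have qp: "q > 0" unfolding q_def using cnj_mult_ne[OF a w] by simp
    have d: "deriv (tf \<alpha> a) w = of_real (l powr t) * of_nat m * cnj a * inverse ((1 - cnj a * w) ^ (m + 1))"
      using tf_higher_deriv[OF a w, of "Suc 0" \<alpha>] by (simp add: m_def l_def t_def)
    have nd: "cmod (deriv (tf \<alpha> a) w) = l powr t * real m * cmod a / q ^ (m + 1)"
      unfolding d q_def by (simp add: norm_mult norm_inverse norm_power divide_inverse)
    have e1: "l powr t \<le> (2 * q) powr t"
      using one_minus_lower[OF an wn] lp tp unfolding l_def q_def by (intro powr_mono2) auto
    have e2: "(1 - cmod w ^ 2) powr \<alpha> \<le> (2 * q) powr \<alpha>"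
      using one_minus_lower[OF wn an] disc_sq[OF wn] \<alpha> unfolding q_def cmod_swap
      by (intro powr_mono2) auto
    have "(1 - cmod w ^ 2) powr \<alpha> * cmod (deriv (tf \<alpha> a) w)
        \<le> (2 * q) powr \<alpha> * ((2 * q) powr t * real m * cmod a / q ^ (m + 1))"
      unfolding nd
      by (rule mult_mono[OF e2]) (use e1 qp in \<open>auto intro!: divide_right_mono mult_right_mono\<close>)
    also have "\<dots> = ((2 * q) powr \<alpha> * (2 * q) powr t) * real m * cmod a / q ^ (m + 1)"
      by (simp add: field_simps)
    also have "(2 * q) powr \<alpha> * (2 * q) powr t = 2 ^ (m + 1) * q ^ (m + 1)"
    proof -
      have "(2 * q) powr \<alpha> * (2 * q) powr t = (2 * q) powr (real (m + 1))"
        unfolding t_def by (simp add: powr_add[symmetric] add.commute)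
      also have "\<dots> = (2 * q) ^ (m + 1)" by (rule powr_realpow) (use qp in simp)
      finally show ?thesis by (simp add: power_mult_distrib)
    qed
    also have "2 ^ (m + 1) * q ^ (m + 1) * real m * cmod a / q ^ (m + 1) = 2 ^ (m + 1) * real m * cmod a"
      using qp by simp
    also have "\<dots> \<le> 2 ^ (m + 1) * real m * 1"
      by (rule mult_left_mono) (use an in auto)
    finally show ?thesis by (simp add: mult_ac)
  qed
  have f0: "cmod (tf \<alpha> a 0) \<le> 1"
  proof -
    have "cmod (tf \<alpha> a 0) = l powr t" unfolding tf_def l_def t_def m_def by simp
    also have "\<dots> \<le> 1" using lp l1 tp by (intro powr_le1) auto
    finally show ?thesis .
  qed
  show "tf \<alpha> a \<in> bloch_space \<alpha>" unfolding bloch_space_def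
    using tf_holo[OF a] bd by blast
  show "bloch_norm \<alpha> (tf \<alpha> a) \<le> 1 + real (mt \<alpha>) * 2 ^ (mt \<alpha> + 1)"
    using bloch_norm_le(1)[OF bd] f0 unfolding m_def by simp
qed

definition KT :: "real \<Rightarrow> real \<Rightarrow> nat \<Rightarrow> nat \<Rightarrow> real" where
  "KT \<alpha> \<beta> n k = fact (n - 1) * 2 powr (\<beta> + real (n - 1)) * 2 powr (\<beta> + real (n - 1)) * 2 ^ k
                   / pochhammer (real (mt \<alpha>)) k"

lemma test_lemma:
  assumes \<alpha>: "\<alpha> > 0" and \<beta>: "\<beta> > 0" and n: "n \<ge> 1" and g: "g holomorphic_on unit_disc"
    and a: "a \<in> unit_disc" and ah: "1/2 \<le> cmod a" and N: "N \<ge> 0"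
    and bnd: "\<And>w. w \<in> unit_disc \<Longrightarrow>
       cmod ((integ_op ^^ (n - 1)) (\<lambda>z. (deriv ^^ k) (tf \<alpha> a) z * g z) w) \<le> N * (1 - cmod w) powr (-\<beta>)"
  shows "(1 - cmod a ^ 2) powr (real n - real k + \<beta> - \<alpha>) * cmod (g a) \<le> KT \<alpha> \<beta> n k * N"
proof -
  define m where "m = mt \<alpha>"
  define l where "l = 1 - cmod a ^ 2"
  define t where "t = real m + 1 - \<alpha>"
  define s where "s = real n - real k + \<beta> - \<alpha>"
  define B where "B = \<beta> + real (n - 1)"
  define u where "u = (\<lambda>z. (deriv ^^ k) (tf \<alpha> a) z * g z)"
  define P where "P = pochhammer (real m) k"
  define X where "X = cmod (g a)"
  define E where "E = fact (n - 1) * N * 2 powr B * 2 powr B"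
  have an: "cmod a < 1" using a by (simp add: disc_norm)
  have lp: "l > 0" unfolding l_def using disc_sq[OF an] .
  have m1: "m \<ge> 1" unfolding m_def using mt_ge(2)[OF \<alpha>] .
  have Pp: "P > 0" unfolding P_def using m1 by (intro pochhammer_pos) simp
  have B0: "B \<ge> 0" unfolding B_def using \<beta> by simp
  have uh: "u holomorphic_on unit_disc" unfolding u_def by (rule u_holo[OF tf_holo[OF a] g])
  have c1: "cmod ((deriv ^^ (n - 1)) ((integ_op ^^ (n - 1)) u) a)
      \<le> fact (n - 1) * N * 2 powr (\<beta> + real (n - 1)) * (1 - cmod a) powr (-(\<beta> + real (n - 1)))"
    by (rule cauchy_growth[OF iter_holo[OF uh] _ _ a]) (use \<beta> bnd in \<open>auto simp: u_def\<close>)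
  have c2: "(deriv ^^ (n - 1)) ((integ_op ^^ (n - 1)) u) a = u a"
    by (rule iter_higher_deriv[OF uh a])
  have c3: "(1 - cmod a) powr (-B) \<le> 2 powr B * l powr (-B)"
    using weight_conv2[OF an, of "-B"] B0 unfolding l_def by simp
  have ineq: "cmod (u a) \<le> E * l powr (-B)"
  proof -
    have "cmod (u a) \<le> fact (n - 1) * N * 2 powr B * (1 - cmod a) powr (-B)"
      using c1 c2 unfolding B_def by simp
    also have "\<dots> \<le> fact (n - 1) * N * 2 powr B * (2 powr B * l powr (-B))"
      by (rule mult_left_mono[OF c3]) (use N in simp)
    finally show ?thesis unfolding E_def by (simp add: mult_ac)
  qed
  have caa: "1 - cnj a * a = of_real l"
    unfolding l_def using complex_norm_square[of a] by (simp add: mult.commute)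
  have pc: "pochhammer (of_nat m :: complex) k = of_real P"
    unfolding P_def by (metis of_real_of_nat_eq pochhammer_of_real)
  have ua: "u a = of_real (l powr t) * of_real P * cnj a ^ k * inverse ((of_real l) ^ (m + k)) * g a"
    unfolding u_def using tf_higher_deriv[OF a a, of k \<alpha>] caa pc
    by (simp add: m_def l_def t_def)
  define R where "R = l powr t / l powr (real (m + k))"
  define Q where "Q = P * cmod a ^ k"
  have Rp: "R > 0" unfolding R_def using lp by simp
  have ak: "cmod a ^ k \<ge> (1/2) ^ k" using ah by (intro power_mono) auto
  have "cmod a > 0" using ah by linarith
  then have akp: "cmod a ^ k > 0" by simp
  have Qp: "Q > 0" unfolding Q_def using Pp ak
    by (metis mult_pos_pos order_less_le_trans zero_less_divide_1_iff zero_less_numeral zero_less_power)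
  have nua: "cmod (u a) = X * R * Q"
  proof -
    have pw: "l ^ (m + k) = l powr (real (m + k))" by (rule powr_realpow[symmetric]) (use lp in simp)
    have "cmod (u a) = l powr t * P * cmod a ^ k * inverse (l ^ (m + k)) * X"
      unfolding ua X_def using lp Pp by (simp add: norm_mult norm_inverse norm_power)
    also have "\<dots> = X * R * Q" unfolding R_def Q_def pw by (simp add: divide_inverse mult_ac)
    finally show ?thesis .
  qed
  have Rid: "l powr s * l powr (-B) = R"
  proof -
    have e: "s + -B = t - real (m + k)" unfolding s_def B_def t_def using n by (simp add: of_nat_diff)
    have "l powr s * l powr (-B) = l powr (s + -B)" using powr_add[of l s "-B"] by simp
    also have "\<dots> = l powr (t - real (m + k))" using e by simp
    also have "\<dots> = R" unfolding R_def using powr_diff[of l t "real (m + k)"] by simp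
    finally show ?thesis .
  qed
  have "l powr s * X = (l powr s * (X * R * Q)) / (R * Q)" using Rp Qp by simp
  also have "\<dots> \<le> (l powr s * (E * l powr (-B))) / (R * Q)"
    using ineq nua Rp Qp by (intro divide_right_mono mult_left_mono) auto
  also have "\<dots> = E * (l powr s * l powr (-B)) / (R * Q)" by (simp add: mult_ac)
  also have "\<dots> = E / Q" unfolding Rid using Rp by simp
  also have "\<dots> \<le> E / (P * (1/2) ^ k)" unfolding Q_def
    using Pp ak N akp by (intro divide_left_mono mult_left_mono mult_pos_pos) (auto simp: E_def)
  also have "\<dots> = KT \<alpha> \<beta> n k * N" unfolding KT_def E_def P_def B_def m_def
    by (simp add: field_simps power_one_over)
  finally show ?thesis unfolding s_def l_def X_def .
qed

lemma cont_cball_bound: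
  fixes \<phi> :: "complex \<Rightarrow> real"
  assumes "continuous_on (cball 0 r) \<phi>"
  shows "\<exists>G. \<forall>z. cmod z \<le> r \<longrightarrow> \<phi> z \<le> G"
proof -
  have "compact (\<phi> ` cball 0 r)" by (rule compact_continuous_image[OF assms compact_cball])
  then obtain G where "\<forall>x\<in>\<phi> ` cball 0 r. norm x \<le> G" using compact_imp_bounded bounded_iff by metis
  then show ?thesis by (metis abs_le_D1 image_eqI mem_cball_0 real_norm_def)
qed

lemma weight_g_cont:
  assumes g: "g holomorphic_on unit_disc" and r: "r < 1"
  shows "continuous_on (cball 0 r) (\<lambda>z. (1 - cmod z ^ 2) powr s * cmod (g z))"
proof -
  have sub: "cball 0 r \<subseteq> unit_disc" using r unfolding unit_disc_def by auto
  have gc: "continuous_on (cball 0 r) g"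
    using holomorphic_on_imp_continuous_on[OF holomorphic_on_subset[OF g sub]] .
  have pos: "\<And>z. z \<in> cball 0 r \<Longrightarrow> 0 < 1 - cmod z ^ 2" using sub disc_sq by (auto simp: disc_norm)
  show ?thesis
    by (intro continuous_intros gc) (use pos in \<open>auto simp: less_imp_neq[symmetric]\<close>)
qed

lemma g_bound_conv:
  assumes C: "\<forall>z\<in>unit_disc. (1 - cmod z ^ 2) powr s * cmod (g z) \<le> C" and w: "w \<in> unit_disc"
  shows "cmod (g w) \<le> C * 2 powr \<bar>s\<bar> * (1 - cmod w) powr (-s)" "C \<ge> 0"
proof -
  have z0: "0 \<in> unit_disc" unfolding unit_disc_def by simp
  have "(1 - cmod (0::complex) ^ 2) powr s * cmod (g 0) \<le> C" using C z0 by blast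
  then have "cmod (g 0) \<le> C" by simp
  then show C0: "C \<ge> 0" using norm_ge_zero order_trans by blast
  have wn: "cmod w < 1" using w by (simp add: disc_norm)
  have pos: "(1 - cmod w ^ 2) powr s > 0" using disc_sq[OF wn] by simp
  have "cmod (g w) \<le> C * (1 - cmod w ^ 2) powr (-s)"
    using C w pos by (simp add: powr_minus field_simps)
  also have "\<dots> \<le> C * (2 powr \<bar>-s\<bar> * (1 - cmod w) powr (-s))"
    by (rule mult_left_mono[OF weight_conv1[OF wn] C0])
  finally show "cmod (g w) \<le> C * 2 powr \<bar>s\<bar> * (1 - cmod w) powr (-s)" by (simp add: mult_ac)
qed

lemma u_bound:
  assumes f: "f \<in> bloch_space \<alpha>" and \<alpha>: "\<alpha> > 0" and k: "k \<ge> 1" and n: "n \<ge> 1"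
    and C: "\<forall>z\<in>unit_disc. (1 - cmod z ^ 2) powr (real n - real k + \<beta> - \<alpha>) * cmod (g z) \<le> C"
    and w: "w \<in> unit_disc"
  shows "cmod ((deriv ^^ k) f w * g w)
     \<le> (fact (k - 1) * 2 powr \<alpha> * 2 powr (\<alpha> + real (k - 1)) * C * 2 powr \<bar>real n - real k + \<beta> - \<alpha>\<bar>)
         * bloch_norm \<alpha> f * (1 - cmod w) powr (-(real n - 1 + \<beta>))"
proof -
  define s where "s = real n - real k + \<beta> - \<alpha>"
  define Kb where "Kb = fact (k - 1) * 2 powr \<alpha> * 2 powr (\<alpha> + real (k - 1))"
  have C': "\<forall>z\<in>unit_disc. (1 - cmod z ^ 2) powr s * cmod (g z) \<le> C" using C unfolding s_def .
  have g1: "cmod (g w) \<le> C * 2 powr \<bar>s\<bar> * (1 - cmod w) powr (-s)" and C0: "C \<ge> 0"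
    using g_bound_conv[OF C' w] by auto
  have f1: "cmod ((deriv ^^ k) f w) \<le> Kb * bloch_norm \<alpha> f * (1 - cmod w) powr (-(\<alpha> + real (k - 1)))"
    using bloch_growth[OF f \<alpha> k w] unfolding Kb_def by simp
  have S0: "bloch_norm \<alpha> f \<ge> 0" using bloch_norm_nonneg[OF f] norm_ge_zero order_trans by blast
  have Kb0: "Kb \<ge> 0" unfolding Kb_def by simp
  have "cmod ((deriv ^^ k) f w * g w) = cmod ((deriv ^^ k) f w) * cmod (g w)" by (simp add: norm_mult)
  also have "\<dots> \<le> (Kb * bloch_norm \<alpha> f * (1 - cmod w) powr (-(\<alpha> + real (k - 1))))
                 * (C * 2 powr \<bar>s\<bar> * (1 - cmod w) powr (-s))"
    by (rule mult_mono[OF f1 g1]) (use Kb0 S0 in auto)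
  also have "\<dots> = (Kb * C * 2 powr \<bar>s\<bar>) * bloch_norm \<alpha> f
                 * ((1 - cmod w) powr (-(\<alpha> + real (k - 1))) * (1 - cmod w) powr (-s))"
    by (simp add: mult_ac)
  also have "(1 - cmod w) powr (-(\<alpha> + real (k - 1))) * (1 - cmod w) powr (-s)
       = (1 - cmod w) powr (-(real n - 1 + \<beta>))"
  proof -
    have "(1 - cmod w) powr (-(\<alpha> + real (k - 1))) * (1 - cmod w) powr (-s)
        = (1 - cmod w) powr (-(\<alpha> + real (k - 1)) + -s)"
      using powr_add[of "1 - cmod w" "-(\<alpha> + real (k - 1))" "-s"] by simp
    also have "-(\<alpha> + real (k - 1)) + -s = -(real n - 1 + \<beta>)"
      unfolding s_def using k by (simp add: of_nat_diff)
    finally show ?thesis .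
  qed
  finally show ?thesis unfolding Kb_def s_def by (simp add: mult_ac)
qed

lemma bounded_suff:
  assumes \<alpha>: "\<alpha> > 0" and \<beta>: "\<beta> > 0" and n: "n \<ge> 1" and k: "k \<ge> 1"
    and g: "g holomorphic_on unit_disc"
    and C: "\<forall>z\<in>unit_disc. (1 - cmod z ^ 2) powr (real n - real k + \<beta> - \<alpha>) * cmod (g z) \<le> C"
  shows "bounded_bloch_op \<alpha> \<beta> (Ignk g n k)"
proof -
  define K1 where "K1 = fact (k - 1) * 2 powr \<alpha> * 2 powr (\<alpha> + real (k - 1)) * C * 2 powr \<bar>real n - real k + \<beta> - \<alpha>\<bar>"
  define KF where "KF = 2 powr \<beta> * Kint (real n - 1 + \<beta>) (n - 1)"
  have z0: "0 \<in> unit_disc" unfolding unit_disc_def by simp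
  have C0: "C \<ge> 0" using g_bound_conv(2)[OF C z0] .
  have K10: "K1 \<ge> 0" unfolding K1_def using C0 by simp
  have main: "Ignk g n k f \<in> bloch_space \<beta> \<and> bloch_norm \<beta> (Ignk g n k f) \<le> KF * K1 * bloch_norm \<alpha> f"
    if f: "f \<in> bloch_space \<alpha>" for f
  proof -
    have holf: "f holomorphic_on unit_disc" using f unfolding bloch_space_def by auto
    have S0: "bloch_norm \<alpha> f \<ge> 0" using bloch_norm_nonneg[OF f] norm_ge_zero order_trans by blast
    have M0: "K1 * bloch_norm \<alpha> f \<ge> 0" using K10 S0 by simp
    have b: "\<And>w. w \<in> unit_disc \<Longrightarrow> cmod ((deriv ^^ k) f w * g w)
              \<le> K1 * bloch_norm \<alpha> f * (1 - cmod w) powr (-(real n - 1 + \<beta>))"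
      using u_bound[OF f \<alpha> k n C] unfolding K1_def by blast
    note fw = forward[OF u_holo[OF holf g] M0 \<beta> n b]
    show ?thesis using fw unfolding Ignk_def KF_def by (simp add: mult_ac)
  qed
  show ?thesis unfolding bounded_bloch_op_def using main by blast
qed

lemma bounded_nec:
  assumes \<alpha>: "\<alpha> > 0" and \<beta>: "\<beta> > 0" and n: "n \<ge> 1" and k: "k \<ge> 1"
    and g: "g holomorphic_on unit_disc"
    and T: "bounded_bloch_op \<alpha> \<beta> (Ignk g n k)"
  shows "\<exists>C. \<forall>z\<in>unit_disc. (1 - cmod z ^ 2) powr (real n - real k + \<beta> - \<alpha>) * cmod (g z) \<le> C"
proof -
  define s where "s = real n - real k + \<beta> - \<alpha>"
  obtain C0 where maps: "\<forall>f\<in>bloch_space \<alpha>. Ignk g n k f \<in> bloch_space \<beta>"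
    and C0: "\<forall>f\<in>bloch_space \<alpha>. bloch_norm \<beta> (Ignk g n k f) \<le> C0 * bloch_norm \<alpha> f"
    using T unfolding bounded_bloch_op_def by blast
  define Bt where "Bt = 1 + real (mt \<alpha>) * 2 ^ (mt \<alpha> + 1)"
  define N0 where "N0 = max C0 0 * Bt * 2 powr \<beta>"
  have Bt0: "Bt \<ge> 0" unfolding Bt_def by simp
  have N00: "N0 \<ge> 0" unfolding N0_def using Bt0 by simp
  have big: "(1 - cmod a ^ 2) powr s * cmod (g a) \<le> KT \<alpha> \<beta> n k * N0"
    if a: "a \<in> unit_disc" and ah: "1/2 \<le> cmod a" for a
  proof -
    define f where "f = tf \<alpha> a"
    have fB: "f \<in> bloch_space \<alpha>" and fn: "bloch_norm \<alpha> f \<le> Bt"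
      using tf_bloch[OF \<alpha> a] unfolding Bt_def f_def by auto
    have fn0: "bloch_norm \<alpha> f \<ge> 0" using bloch_norm_nonneg[OF fB] norm_ge_zero order_trans by blast
    have TB: "Ignk g n k f \<in> bloch_space \<beta>" using maps fB by blast
    have Tn: "bloch_norm \<beta> (Ignk g n k f) \<le> max C0 0 * Bt"
    proof -
      have "bloch_norm \<beta> (Ignk g n k f) \<le> C0 * bloch_norm \<alpha> f" using C0 fB by blast
      also have "\<dots> \<le> max C0 0 * bloch_norm \<alpha> f" by (rule mult_right_mono) (use fn0 in auto)
      also have "\<dots> \<le> max C0 0 * Bt" by (rule mult_left_mono[OF fn]) simp
      finally show ?thesis .
    qed
    have bnd: "cmod ((integ_op ^^ (n - 1)) (\<lambda>z. (deriv ^^ k) (tf \<alpha> a) z * g z) w) \<le> N0 * (1 - cmod w) powr (-\<beta>)"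
      if w: "w \<in> unit_disc" for w
    proof -
      have wn: "cmod w < 1" using w by (simp add: disc_norm)
      have pos: "(1 - cmod w ^ 2) powr \<beta> > 0" using disc_sq[OF wn] by simp
      have e: "deriv (Ignk g n k f) w = (integ_op ^^ (n - 1)) (\<lambda>z. (deriv ^^ k) (tf \<alpha> a) z * g z) w"
        unfolding f_def by (rule T_deriv[OF tf_holo[OF a] g n w])
      have "(1 - cmod w ^ 2) powr \<beta> * cmod (deriv (Ignk g n k f) w) \<le> max C0 0 * Bt"
        using bloch_deriv_le[OF TB w] Tn norm_ge_zero[of "Ignk g n k f 0"] by linarith
      then have "cmod (deriv (Ignk g n k f) w) \<le> max C0 0 * Bt * (1 - cmod w ^ 2) powr (-\<beta>)"
        using pos by (simp add: powr_minus field_simps)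
      also have "\<dots> \<le> max C0 0 * Bt * (2 powr \<bar>-\<beta>\<bar> * (1 - cmod w) powr (-\<beta>))"
        by (rule mult_left_mono[OF weight_conv1[OF wn]]) (use Bt0 in simp)
      finally show ?thesis unfolding e N0_def using \<beta> by (simp add: mult_ac)
    qed
    show ?thesis using test_lemma[OF \<alpha> \<beta> n g a ah N00 bnd] unfolding s_def .
  qed
  obtain G where G: "\<forall>z. cmod z \<le> 1/2 \<longrightarrow> (1 - cmod z ^ 2) powr s * cmod (g z) \<le> G"
    using cont_cball_bound[OF weight_g_cont[OF g, of "1/2" s]] by auto
  show ?thesis
  proof (intro exI ballI)
    fix z assume z: "z \<in> unit_disc"
    show "(1 - cmod z ^ 2) powr (real n - real k + \<beta> - \<alpha>) * cmod (g z) \<le> max (KT \<alpha> \<beta> n k * N0) G"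
    proof (cases "cmod z \<le> 1/2")
      case True then show ?thesis using G unfolding s_def by fastforce
    next
      case False then show ?thesis using big[OF z] unfolding s_def by fastforce
    qed
  qed
qed

lemma bloch_norm_cong:
  assumes "\<And>z. z \<in> unit_disc \<Longrightarrow> F1 z = F2 z"
  shows "bloch_norm \<beta> F1 = bloch_norm \<beta> F2"
proof -
  have op: "open unit_disc" unfolding unit_disc_def by simp
  have z0: "0 \<in> unit_disc" unfolding unit_disc_def by simp
  have d: "deriv F1 z = deriv F2 z" if z: "z \<in> unit_disc" for z
    by (rule deriv_cong_ev[OF _ refl]) (use eventually_nhds_in_open[OF op z] assms in \<open>auto elim!: eventually_mono\<close>)
  show ?thesis unfolding bloch_norm_def using assms[OF z0] d by simp
qed

lemma bloch_diff:
  assumes "f1 \<in> bloch_space \<beta>" "f2 \<in> bloch_space \<beta>"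
  shows "(\<lambda>z. f1 z - f2 z) \<in> bloch_space \<beta>"
proof -
  have op: "open unit_disc" unfolding unit_disc_def by simp
  obtain C1 where h1: "f1 holomorphic_on unit_disc" and C1: "\<forall>z\<in>unit_disc. (1 - cmod z ^ 2) powr \<beta> * cmod (deriv f1 z) \<le> C1"
    using assms(1) unfolding bloch_space_def by blast
  obtain C2 where h2: "f2 holomorphic_on unit_disc" and C2: "\<forall>z\<in>unit_disc. (1 - cmod z ^ 2) powr \<beta> * cmod (deriv f2 z) \<le> C2"
    using assms(2) unfolding bloch_space_def by blast
  have "(1 - cmod z ^ 2) powr \<beta> * cmod (deriv (\<lambda>z. f1 z - f2 z) z) \<le> C1 + C2" if z: "z \<in> unit_disc" for z
  proof -
    have "deriv (\<lambda>z. f1 z - f2 z) z = deriv f1 z - deriv f2 z"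
      by (rule deriv_diff) (use holomorphic_on_imp_differentiable_at[OF _ op z] h1 h2 in auto)
    then have "cmod (deriv (\<lambda>z. f1 z - f2 z) z) \<le> cmod (deriv f1 z) + cmod (deriv f2 z)"
      by (simp add: norm_triangle_ineq4)
    then have "(1 - cmod z ^ 2) powr \<beta> * cmod (deriv (\<lambda>z. f1 z - f2 z) z)
        \<le> (1 - cmod z ^ 2) powr \<beta> * cmod (deriv f1 z) + (1 - cmod z ^ 2) powr \<beta> * cmod (deriv f2 z)"
      by (metis distrib_left mult_left_mono powr_ge_zero)
    then show ?thesis using C1 C2 z by fastforce
  qed
  moreover have "(\<lambda>z. f1 z - f2 z) holomorphic_on unit_disc" using h1 h2 by (intro holomorphic_intros)
  ultimately show ?thesis unfolding bloch_space_def by blast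
qed

lemma compact_in_disc:
  assumes "compact K" "K \<subseteq> unit_disc"
  shows "\<exists>r. 0 \<le> r \<and> r < 1 \<and> (\<forall>z\<in>K. cmod z \<le> r)"
proof (cases "K = {}")
  case True then show ?thesis by (intro exI[of _ 0]) auto
next
  case False
  have "compact (cmod ` K)" by (rule compact_continuous_image[OF continuous_on_norm_id assms(1)])
  moreover have "cmod ` K \<noteq> {}" using False by simp
  ultimately obtain sv where "sv \<in> cmod ` K" "\<forall>t\<in>cmod ` K. t \<le> sv" using compact_attains_sup by blast
  then obtain x where x: "x \<in> K" "\<forall>y\<in>K. cmod y \<le> cmod x" by auto
  then show ?thesis using assms(2) by (intro exI[of _ "cmod x"]) (auto simp: disc_norm)
qed

lemma g_pt:
  assumes z: "z \<in> unit_disc" and c: "(1 - cmod z ^ 2) powr s * cmod (g z) \<le> c"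
  shows "cmod (g z) \<le> c * 2 powr \<bar>s\<bar> * (1 - cmod z) powr (-s)"
proof -
  have zn: "cmod z < 1" using z by (simp add: disc_norm)
  have pos: "(1 - cmod z ^ 2) powr s > 0" using disc_sq[OF zn] by simp
  have c0: "c \<ge> 0" using c pos by (smt (verit) mult_nonneg_nonneg norm_ge_zero)
  have "cmod (g z) \<le> c * (1 - cmod z ^ 2) powr (-s)"
    using c pos by (simp add: powr_minus field_simps)
  also have "\<dots> \<le> c * (2 powr \<bar>-s\<bar> * (1 - cmod z) powr (-s))"
    by (rule mult_left_mono[OF weight_conv1[OF zn] c0])
  finally show ?thesis by (simp add: mult_ac)
qed

lemma prod_bound:
  assumes z: "z \<in> unit_disc" and A: "cmod (A z) \<le> P * (1 - cmod z) powr (-p)" and P: "P \<ge> 0"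
    and c: "(1 - cmod z ^ 2) powr s * cmod (g z) \<le> c"
  shows "cmod (A z * g z) \<le> P * c * 2 powr \<bar>s\<bar> * (1 - cmod z) powr (-(p + s))"
proof -
  have zn: "cmod z < 1" using z by (simp add: disc_norm)
  have g1: "cmod (g z) \<le> c * 2 powr \<bar>s\<bar> * (1 - cmod z) powr (-s)" by (rule g_pt[where g=g, OF z c])
  have "cmod (A z * g z) = cmod (A z) * cmod (g z)" by (simp add: norm_mult)
  also have "\<dots> \<le> (P * (1 - cmod z) powr (-p)) * (c * 2 powr \<bar>s\<bar> * (1 - cmod z) powr (-s))"
    by (rule mult_mono[OF A g1]) (use P in auto)
  also have "\<dots> = P * c * 2 powr \<bar>s\<bar> * ((1 - cmod z) powr (-p) * (1 - cmod z) powr (-s))"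
    by (simp add: mult_ac)
  also have "(1 - cmod z) powr (-p) * (1 - cmod z) powr (-s) = (1 - cmod z) powr (-(p + s))"
    using powr_add[of "1 - cmod z" "-p" "-s"] by simp
  finally show ?thesis .
qed

lemma lo_imp_bounded:
  assumes g: "g holomorphic_on unit_disc"
    and lo: "\<forall>\<epsilon>>0. \<exists>r<1. \<forall>z\<in>unit_disc. r < cmod z \<longrightarrow> (1 - cmod z ^ 2) powr s * cmod (g z) < \<epsilon>"
  shows "\<exists>C. \<forall>z\<in>unit_disc. (1 - cmod z ^ 2) powr s * cmod (g z) \<le> C"
proof -
  obtain r where r: "r < 1" "\<forall>z\<in>unit_disc. r < cmod z \<longrightarrow> (1 - cmod z ^ 2) powr s * cmod (g z) < 1"
    using lo by (meson zero_less_one)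
  define r' where "r' = max r 0"
  have r': "r' < 1" unfolding r'_def using r by simp
  obtain G where G: "\<forall>z. cmod z \<le> r' \<longrightarrow> (1 - cmod z ^ 2) powr s * cmod (g z) \<le> G"
    using cont_cball_bound[OF weight_g_cont[OF g r', of s]] by auto
  show ?thesis
  proof (intro exI ballI)
    fix z assume z: "z \<in> unit_disc"
    show "(1 - cmod z ^ 2) powr s * cmod (g z) \<le> max 1 G"
    proof (cases "cmod z \<le> r'")
      case True then show ?thesis using G by fastforce
    next
      case False then have "r < cmod z" unfolding r'_def by simp
      then show ?thesis using r(2) z by fastforce
    qed
  qed
qed

lemma powr_neg_ge1:
  assumes "cmod z < 1" "\<gamma> \<ge> 0"
  shows "1 \<le> (1 - cmod z) powr (-\<gamma>)"
proof -
  have "(1 - cmod z) powr \<gamma> \<le> 1" using assms by (intro powr_le1) auto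
  moreover have "(1 - cmod z) powr \<gamma> > 0" using assms by simp
  ultimately show ?thesis by (simp add: powr_minus field_simps)
qed

lemma compact_suff:
  assumes \<alpha>: "\<alpha> > 0" and \<beta>: "\<beta> > 0" and n: "n \<ge> 1" and k: "k \<ge> 1"
    and g: "g holomorphic_on unit_disc"
    and lo: "\<forall>\<epsilon>>0. \<exists>r<1. \<forall>z\<in>unit_disc. r < cmod z \<longrightarrow>
               (1 - (cmod z)^2) powr (real n - real k + \<beta> - \<alpha>) * cmod (g z) < \<epsilon>"
  shows "compact_bloch_op \<alpha> \<beta> (Ignk g n k)"
proof -
  define s where "s = real n - real k + \<beta> - \<alpha>"
  define p where "p = \<alpha> + real (k - 1)"
  define \<gamma> where "\<gamma> = real n - 1 + \<beta>"
  define Kb where "Kb = fact (k - 1) * 2 powr \<alpha> * 2 powr (\<alpha> + real (k - 1))"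
  have op: "open unit_disc" unfolding unit_disc_def by simp
  have ps: "p + s = \<gamma>" unfolding p_def s_def \<gamma>_def using k by (simp add: of_nat_diff)
  have lo': "\<forall>\<epsilon>>0. \<exists>r<1. \<forall>z\<in>unit_disc. r < cmod z \<longrightarrow> (1 - cmod z ^ 2) powr s * cmod (g z) < \<epsilon>"
    using lo unfolding s_def .
  obtain C where C: "\<forall>z\<in>unit_disc. (1 - cmod z ^ 2) powr s * cmod (g z) \<le> C"
    using lo_imp_bounded[OF g lo'] by blast
  have z0: "0 \<in> unit_disc" unfolding unit_disc_def by simp
  have C0: "C \<ge> 0" using g_bound_conv(2)[OF C z0] .
  have bdd: "bounded_bloch_op \<alpha> \<beta> (Ignk g n k)"
    by (rule bounded_suff[OF \<alpha> \<beta> n k g]) (use C in \<open>simp add: s_def\<close>)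
  then have maps: "\<forall>f\<in>bloch_space \<alpha>. Ignk g n k f \<in> bloch_space \<beta>" unfolding bounded_bloch_op_def by blast
  show ?thesis unfolding compact_bloch_op_def
  proof (intro conjI allI impI)
    show "\<forall>f\<in>bloch_space \<alpha>. Ignk g n k f \<in> bloch_space \<beta>" by (rule maps)
    fix fs :: "nat \<Rightarrow> complex \<Rightarrow> complex"
    assume fsB: "\<forall>j. fs j \<in> bloch_space \<alpha>" and "\<exists>M. \<forall>j. bloch_norm \<alpha> (fs j) \<le> M"
    then obtain M0 where M0: "\<forall>j. bloch_norm \<alpha> (fs j) \<le> M0" by blast
    define M where "M = max M0 0"
    define F where "F j = (deriv ^^ k) (fs j)" for j
    define A where "A = Kb * M"
    have A0: "A \<ge> 0" unfolding A_def M_def Kb_def by simp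
    have Fb: "cmod (F j z) \<le> A * (1 - cmod z) powr (-p)" if z: "z \<in> unit_disc" for j z
    proof -
      have "cmod (F j z) \<le> Kb * bloch_norm \<alpha> (fs j) * (1 - cmod z) powr (-p)"
        using bloch_growth[OF fsB[rule_format, of j] \<alpha> k z] unfolding F_def Kb_def p_def by simp
      also have "\<dots> \<le> Kb * M * (1 - cmod z) powr (-p)"
        using M0 unfolding M_def Kb_def
        by (intro mult_right_mono mult_left_mono) (auto simp: le_max_iff_disj)
      finally show ?thesis unfolding A_def .
    qed
    have Fh: "F j holomorphic_on unit_disc" for j
      unfolding F_def using fsB holomorphic_higher_deriv[OF _ op] unfolding bloch_space_def by blast
    define Hs where "Hs = {h. h holomorphic_on unit_disc \<and> (\<forall>z\<in>unit_disc. cmod (h z) \<le> A * (1 - cmod z) powr (-p))}"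
    have Hbd: "\<exists>B. \<forall>h\<in>Hs. \<forall>z\<in>K. cmod (h z) \<le> B" if K: "compact K" "K \<subseteq> unit_disc" for K
    proof -
      obtain r where r: "0 \<le> r" "r < 1" "\<forall>z\<in>K. cmod z \<le> r" using compact_in_disc[OF K] by blast
      have "cmod (h z) \<le> A * (1 - r) powr (-p)" if h: "h \<in> Hs" and z: "z \<in> K" for h z
      proof -
        have zD: "z \<in> unit_disc" using K z by auto
        have p0: "p \<ge> 0" unfolding p_def using \<alpha> by simp
        have zr: "cmod z \<le> r" using r(3) z by blast
        have pm: "(1 - cmod z) powr (-p) \<le> (1 - r) powr (-p)"
          by (rule powr_mono2') (use p0 r(2) zr in auto)
        have hb: "cmod (h z) \<le> A * (1 - cmod z) powr (-p)" using h zD unfolding Hs_def by blast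
        show ?thesis by (rule order_trans[OF hb mult_left_mono[OF pm A0]])
      qed
      then show ?thesis by blast
    qed
    have rng: "range F \<subseteq> Hs" unfolding Hs_def using Fh Fb by blast
    obtain v \<rho> where vh: "v holomorphic_on unit_disc" and sm: "strict_mono \<rho>"
      and pt: "\<And>x. x \<in> unit_disc \<Longrightarrow> ((\<lambda>j. F (\<rho> j) x) \<longlongrightarrow> v x) sequentially"
      and ul: "\<And>K. \<lbrakk>compact K; K \<subseteq> unit_disc\<rbrakk> \<Longrightarrow> uniform_limit K (F \<circ> \<rho>) v sequentially"
      using Montel[OF op _ Hbd rng] unfolding Hs_def by blast
    have vb: "cmod (v z) \<le> A * (1 - cmod z) powr (-p)" if z: "z \<in> unit_disc" for z
    proof (rule tendsto_upperbound)
      show "((\<lambda>j. cmod (F (\<rho> j) z)) \<longlongrightarrow> cmod (v z)) sequentially"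
        by (rule tendsto_norm[OF pt[OF z]])
      show "\<forall>\<^sub>F j in sequentially. cmod (F (\<rho> j) z) \<le> A * (1 - cmod z) powr (-p)"
        using Fb[OF z] by simp
    qed simp
    define h where "h = (integ_op ^^ n) (\<lambda>z. v z * g z)"
    have vgb: "cmod (v z * g z) \<le> A * C * 2 powr \<bar>s\<bar> * (1 - cmod z) powr (-(real n - 1 + \<beta>))"
      if z: "z \<in> unit_disc" for z
      using prod_bound[where A=v and g=g and s=s and c=C, OF z vb[OF z] A0] C z ps unfolding \<gamma>_def by simp
    have hB: "h \<in> bloch_space \<beta>" unfolding h_def
      by (rule forward(1)[OF holomorphic_on_mult[OF vh g] _ \<beta> n vgb]) (use A0 C0 in simp)
    define d where "d j = (\<lambda>z. (F (\<rho> j) z - v z) * g z)" for j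
    have dh: "d j holomorphic_on unit_disc" for j unfolding d_def using Fh vh g by (intro holomorphic_intros)
    have eqD: "Ignk g n k (fs (\<rho> j)) z - h z = (integ_op ^^ n) (d j) z" if z: "z \<in> unit_disc" for j z
    proof -
      have "d j = (\<lambda>w. F (\<rho> j) w * g w - v w * g w)" unfolding d_def by (simp add: fun_eq_iff left_diff_distrib)
      then have "(integ_op ^^ n) (d j) z = (integ_op ^^ n) (\<lambda>w. F (\<rho> j) w * g w) z - (integ_op ^^ n) (\<lambda>w. v w * g w) z"
        using iter_diff[OF holomorphic_on_mult[OF Fh g] holomorphic_on_mult[OF vh g] z, of n] by simp
      then show ?thesis unfolding Ignk_def h_def F_def by simp
    qed
    define KF where "KF = 2 powr \<beta> * Kint \<gamma> (n - 1)"
    have KF0: "KF > 0" unfolding KF_def using Kint_pos[of "n - 1" \<gamma>] \<beta> n unfolding \<gamma>_def by (simp add: of_nat_diff)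
    define W where "W = 2 * A * 2 powr \<bar>s\<bar> + 1"
    have W1: "W \<ge> 1" unfolding W_def using A0 by simp
    have key: "\<exists>J. \<forall>j\<ge>J. bloch_norm \<beta> ((integ_op ^^ n) (d j)) < e \<and> 0 \<le> bloch_norm \<beta> ((integ_op ^^ n) (d j))"
      if e: "e > 0" for e
    proof -
      define \<epsilon> where "\<epsilon> = e / (2 * KF * W)"
      have \<epsilon>0: "\<epsilon> > 0" unfolding \<epsilon>_def using e KF0 W1 by simp
      obtain r where r: "r < 1" "\<forall>z\<in>unit_disc. r < cmod z \<longrightarrow> (1 - cmod z ^ 2) powr s * cmod (g z) < \<epsilon>"
        using lo' \<epsilon>0 by blast
      define r' where "r' = max r 0"
      have r': "r' < 1" "r' \<ge> 0" unfolding r'_def using r by auto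
      have sub: "cball 0 r' \<subseteq> unit_disc" using r' unfolding unit_disc_def by auto
      have gc: "continuous_on (cball 0 r') (\<lambda>z. cmod (g z))"
        by (intro continuous_intros holomorphic_on_imp_continuous_on[OF holomorphic_on_subset[OF g sub]])
      obtain Gg where Gg: "\<forall>z. cmod z \<le> r' \<longrightarrow> cmod (g z) \<le> Gg" using cont_cball_bound[OF gc] by blast
      define G' where "G' = max Gg 0"
      define \<eta> where "\<eta> = \<epsilon> / (G' + 1)"
      have \<eta>0: "\<eta> > 0" unfolding \<eta>_def G'_def using \<epsilon>0 by simp
      have "uniform_limit (cball 0 r') (F \<circ> \<rho>) v sequentially" by (rule ul[OF compact_cball sub])
      then have "\<forall>\<^sub>F j in sequentially. \<forall>y\<in>cball 0 r'. dist ((F \<circ> \<rho>) j y) (v y) < \<eta>"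
        using \<eta>0 uniform_limit_iff by blast
      then obtain J where J: "\<And>j y. j \<ge> J \<Longrightarrow> y \<in> cball 0 r' \<Longrightarrow> dist (F (\<rho> j) y) (v y) < \<eta>"
        unfolding eventually_sequentially comp_def by blast
      have dB: "cmod (d j z) \<le> (W * \<epsilon>) * (1 - cmod z) powr (-(real n - 1 + \<beta>))"
        if j: "j \<ge> J" and z: "z \<in> unit_disc" for j z
      proof -
        have zn: "cmod z < 1" using z by (simp add: disc_norm)
        have g0: "1 \<le> (1 - cmod z) powr (-(real n - 1 + \<beta>))" by (rule powr_neg_ge1[OF zn]) (use \<beta> n in simp)
        show ?thesis
        proof (cases "cmod z \<le> r'")
          case True
          have "cmod (d j z) = cmod (F (\<rho> j) z - v z) * cmod (g z)" unfolding d_def by (simp add: norm_mult)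
          also have "\<dots> \<le> \<eta> * G'"
            using J[OF j, of z] True Gg \<eta>0 unfolding G'_def
            by (intro mult_mono) (auto simp: dist_norm le_max_iff_disj)
          also have "\<dots> \<le> \<epsilon>" unfolding \<eta>_def G'_def using \<epsilon>0 by (simp add: field_simps)
          also have "\<dots> \<le> W * \<epsilon> * 1" using W1 \<epsilon>0 by simp
          also have "\<dots> \<le> W * \<epsilon> * (1 - cmod z) powr (-(real n - 1 + \<beta>))"
            by (rule mult_left_mono[OF g0]) (use W1 \<epsilon>0 in simp)
          finally show ?thesis .
        next
          case False
          then have rz: "r < cmod z" unfolding r'_def by simp
          have c: "(1 - cmod z ^ 2) powr s * cmod (g z) \<le> \<epsilon>" using r(2) z rz by fastforce
          have Fv: "cmod (F (\<rho> j) z - v z) \<le> (2 * A) * (1 - cmod z) powr (-p)"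
            using norm_triangle_ineq4[of "F (\<rho> j) z" "v z"] Fb[OF z, of "\<rho> j"] vb[OF z] by simp
          have "cmod (d j z) \<le> 2 * A * \<epsilon> * 2 powr \<bar>s\<bar> * (1 - cmod z) powr (-(p + s))"
            unfolding d_def
            by (rule prod_bound[where A="\<lambda>w. F (\<rho> j) w - v w" and g=g, OF z Fv _ c]) (use A0 in simp)
          also have "\<dots> \<le> W * \<epsilon> * (1 - cmod z) powr (-(p + s))"
            unfolding W_def using \<epsilon>0 by (intro mult_right_mono) (auto simp: field_simps)
          finally show ?thesis using ps unfolding \<gamma>_def by simp
        qed
      qed
      have "bloch_norm \<beta> ((integ_op ^^ n) (d j)) < e \<and> 0 \<le> bloch_norm \<beta> ((integ_op ^^ n) (d j))"
        if j: "j \<ge> J" for j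
      proof
        have We: "W * \<epsilon> \<ge> 0" using W1 \<epsilon>0 by simp
        have "bloch_norm \<beta> ((integ_op ^^ n) (d j)) \<le> 2 powr \<beta> * Kint (real n - 1 + \<beta>) (n - 1) * (W * \<epsilon>)"
          by (rule forward(2)[OF dh We \<beta> n dB[OF j]])
        also have "\<dots> = KF * (W * \<epsilon>)" unfolding KF_def \<gamma>_def by simp
        also have "\<dots> = e / 2" unfolding \<epsilon>_def using KF0 W1 by (simp add: field_simps)
        finally show "bloch_norm \<beta> ((integ_op ^^ n) (d j)) < e" using e by simp
        have "(integ_op ^^ n) (d j) \<in> bloch_space \<beta>" by (rule forward(1)[OF dh We \<beta> n dB[OF j]])
        then show "0 \<le> bloch_norm \<beta> ((integ_op ^^ n) (d j))"
          using bloch_norm_nonneg norm_ge_zero order_trans by blast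
      qed
      then show ?thesis by blast
    qed
    have conv: "(\<lambda>j. bloch_norm \<beta> (\<lambda>z. Ignk g n k (fs (\<rho> j)) z - h z)) \<longlonglongrightarrow> 0"
    proof (rule LIMSEQ_I)
      fix e :: real assume e: "e > 0"
      obtain J where J: "\<forall>j\<ge>J. bloch_norm \<beta> ((integ_op ^^ n) (d j)) < e \<and> 0 \<le> bloch_norm \<beta> ((integ_op ^^ n) (d j))"
        using key[OF e] by blast
      have "norm (bloch_norm \<beta> (\<lambda>z. Ignk g n k (fs (\<rho> j)) z - h z) - 0) < e" if j: "j \<ge> J" for j
      proof -
        have "bloch_norm \<beta> (\<lambda>z. Ignk g n k (fs (\<rho> j)) z - h z) = bloch_norm \<beta> ((integ_op ^^ n) (d j))"
          by (rule bloch_norm_cong) (rule eqD)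
        then show ?thesis using J j by auto
      qed
      then show "\<exists>no. \<forall>j\<ge>no. norm (bloch_norm \<beta> (\<lambda>z. Ignk g n k (fs (\<rho> j)) z - h z) - 0) < e" by blast
    qed
    show "\<exists>r h. strict_mono r \<and> h \<in> bloch_space \<beta> \<and>
           (\<lambda>j. bloch_norm \<beta> (\<lambda>z. Ignk g n k (fs (r j)) z - h z)) \<longlonglongrightarrow> 0"
      using sm hB conv by blast
  qed
qed

lemma tf_deriv_local:
  assumes a: "a \<in> unit_disc" and r: "r < 1" and z: "cmod z \<le> r" and \<alpha>: "\<alpha> > 0"
  shows "cmod ((deriv ^^ k) (tf \<alpha> a) z)
     \<le> (1 - cmod a ^ 2) powr (real (mt \<alpha>) + 1 - \<alpha>) * pochhammer (real (mt \<alpha>)) k / (1 - r) ^ (mt \<alpha> + k)"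
proof -
  define m where "m = mt \<alpha>"
  define q where "q = cmod (1 - cnj a * z)"
  define L where "L = (1 - cmod a ^ 2) powr (real m + 1 - \<alpha>)"
  define P where "P = pochhammer (real m) k"
  have an: "cmod a < 1" using a by (simp add: disc_norm)
  have zD: "z \<in> unit_disc" using z r by (simp add: disc_norm)
  have L0: "L \<ge> 0" unfolding L_def by simp
  have P0: "P \<ge> 0" unfolding P_def by (rule pochhammer_nonneg) (use mt_ge(2)[OF \<alpha>] in \<open>simp add: m_def\<close>)
  have pc: "pochhammer (of_nat (mt \<alpha>) :: complex) k = of_real P"
    unfolding P_def m_def by (metis of_real_of_nat_eq pochhammer_of_real)
  have q1: "1 - r \<le> q"
  proof -
    have "1 - cmod a * cmod z \<le> q"
      using norm_triangle_ineq2[of 1 "cnj a * z"] unfolding q_def by (simp add: norm_mult)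
    moreover have "cmod a * cmod z \<le> cmod z" by (rule mult_left_le_one_le) (use an in auto)
    ultimately show ?thesis using z by argo
  qed
  have rp: "1 - r > 0" using r by simp
  have "cmod ((deriv ^^ k) (tf \<alpha> a) z) = L * P * cmod a ^ k / q ^ (m + k)"
    unfolding tf_higher_deriv[OF a zD] pc q_def L_def m_def using P0
    by (simp add: norm_mult norm_inverse norm_power divide_inverse)
  also have "\<dots> \<le> L * P * 1 / (1 - r) ^ (m + k)"
  proof (rule frac_le)
    show "L * P * cmod a ^ k \<le> L * P * 1"
      by (rule mult_left_mono) (use an L0 P0 in \<open>auto simp: power_le_one\<close>)
    show "(1 - r) ^ (m + k) \<le> q ^ (m + k)" by (rule power_mono[OF q1]) (use rp in simp)
  qed (use L0 P0 rp in auto)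
  finally show ?thesis unfolding L_def P_def m_def by simp
qed

lemma seq_powr_zero:
  assumes "t > 0"
  shows "(\<lambda>j. (2 / (real j + 2)) powr t) \<longlonglongrightarrow> 0"
proof (rule tendsto_zero_powrI[OF _ tendsto_const _ assms])
  have "(\<lambda>j. inverse (real (Suc (Suc j)))) \<longlonglongrightarrow> 0"
    by (rule LIMSEQ_Suc[OF LIMSEQ_inverse_real_of_nat])
  then have "(\<lambda>j. 2 * inverse (real (Suc (Suc j)))) \<longlonglongrightarrow> 0"
    by (rule tendsto_mult_right_zero)
  moreover have "(\<lambda>j. 2 * inverse (real (Suc (Suc j)))) = (\<lambda>j. 2 / (real j + 2))"
    by (simp add: fun_eq_iff divide_inverse add.commute)
  ultimately show "(\<lambda>j. 2 / (real j + 2)) \<longlonglongrightarrow> 0" by (simp only:)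
qed simp

lemma compact_nec:
  assumes \<alpha>: "\<alpha> > 0" and \<beta>: "\<beta> > 0" and n: "n \<ge> 1" and k: "k \<ge> 1"
    and g: "g holomorphic_on unit_disc"
    and T: "compact_bloch_op \<alpha> \<beta> (Ignk g n k)"
  shows "\<forall>\<epsilon>>0. \<exists>r<1. \<forall>z\<in>unit_disc. r < cmod z \<longrightarrow>
               (1 - (cmod z)^2) powr (real n - real k + \<beta> - \<alpha>) * cmod (g z) < \<epsilon>"
proof (rule ccontr)
  define s where "s = real n - real k + \<beta> - \<alpha>"
  define \<phi> where "\<phi> z = (1 - (cmod z)^2) powr s * cmod (g z)" for z
  have op: "open unit_disc" unfolding unit_disc_def by simp
  assume "\<not> ?thesis"
  then obtain \<epsilon> where \<epsilon>: "\<epsilon> > 0" and bad: "\<And>r. r < 1 \<Longrightarrow> \<exists>z\<in>unit_disc. r < cmod z \<and> \<epsilon> \<le> \<phi> z"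
    unfolding \<phi>_def s_def by (meson not_less)
  define rr where "rr j = 1 - 1 / (real j + 2)" for j :: nat
  have rr1: "rr j < 1" for j unfolding rr_def by simp
  have rrh: "1/2 \<le> rr j" for j unfolding rr_def by (simp add: field_simps)
  have "\<forall>j. \<exists>z. z \<in> unit_disc \<and> rr j < cmod z \<and> \<epsilon> \<le> \<phi> z" using bad[OF rr1] by blast
  then obtain a where aa: "\<forall>j. a j \<in> unit_disc \<and> rr j < cmod (a j) \<and> \<epsilon> \<le> \<phi> (a j)" by metis
  have a: "a j \<in> unit_disc" and ar: "rr j < cmod (a j)" and a\<phi>: "\<epsilon> \<le> \<phi> (a j)" for j using aa by auto
  have ah: "1/2 \<le> cmod (a j)" for j using rrh[of j] ar[of j] by linarith
  define fs where "fs j = tf \<alpha> (a j)" for j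
  define Bt where "Bt = 1 + real (mt \<alpha>) * 2 ^ (mt \<alpha> + 1)"
  have fsB: "\<forall>j. fs j \<in> bloch_space \<alpha>" and fsn: "\<forall>j. bloch_norm \<alpha> (fs j) \<le> Bt"
    using tf_bloch[OF \<alpha> a] unfolding fs_def Bt_def by auto
  have maps: "\<forall>f\<in>bloch_space \<alpha>. Ignk g n k f \<in> bloch_space \<beta>" using T unfolding compact_bloch_op_def by blast
  obtain \<rho> h where sm: "strict_mono \<rho>" and hB: "h \<in> bloch_space \<beta>"
    and conv: "(\<lambda>j. bloch_norm \<beta> (\<lambda>z. Ignk g n k (fs (\<rho> j)) z - h z)) \<longlonglongrightarrow> 0"
    using T fsB fsn unfolding compact_bloch_op_def by blast
  define N where "N j = bloch_norm \<beta> (\<lambda>z. Ignk g n k (fs (\<rho> j)) z - h z)" for j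
  define D where "D j = (\<lambda>z. Ignk g n k (fs (\<rho> j)) z - h z)" for j
  define u where "u j = (\<lambda>z. (deriv ^^ k) (tf \<alpha> (a (\<rho> j))) z * g z)" for j
  have TB: "Ignk g n k (fs j) \<in> bloch_space \<beta>" for j using maps fsB by blast
  have DB: "D j \<in> bloch_space \<beta>" for j unfolding D_def by (rule bloch_diff[OF TB hB])
  have N0: "N j \<ge> 0" for j
    using bloch_norm_nonneg[OF DB[of j]] norm_ge_zero order_trans unfolding N_def D_def by blast
  have dD: "(1 - cmod w ^ 2) powr \<beta> * cmod (deriv (D j) w) \<le> N j" if w: "w \<in> unit_disc" for j w
    using bloch_deriv_le[OF DB[of j] w] norm_ge_zero[of "D j 0"] unfolding N_def D_def by linarith
  have Th: "Ignk g n k (fs j) holomorphic_on unit_disc" for j using TB unfolding bloch_space_def by blast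
  have hh: "h holomorphic_on unit_disc" using hB unfolding bloch_space_def by blast
  have uh: "u j holomorphic_on unit_disc" for j unfolding u_def by (rule u_holo[OF tf_holo[OF a] g])
  have Td: "deriv (Ignk g n k (fs (\<rho> j))) w = (integ_op ^^ (n - 1)) (u j) w" if w: "w \<in> unit_disc" for j w
    unfolding fs_def u_def by (rule T_deriv[OF tf_holo[OF a] g n w])
  have dsplit: "deriv (D j) w = deriv (Ignk g n k (fs (\<rho> j))) w - deriv h w" if w: "w \<in> unit_disc" for j w
    unfolding D_def
    by (rule deriv_diff; rule holomorphic_on_imp_differentiable_at[OF _ op w]) (use Th hh in auto)
  have h0: "deriv h w = 0" if w: "w \<in> unit_disc" for w
  proof -
    define r where "r = cmod w"
    have r1: "r < 1" using w unfolding r_def by (simp add: disc_norm)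
    have sub: "cball 0 r \<subseteq> unit_disc" using r1 unfolding unit_disc_def by auto
    have gc: "continuous_on (cball 0 r) (\<lambda>z. cmod (g z))"
      by (intro continuous_intros holomorphic_on_imp_continuous_on[OF holomorphic_on_subset[OF g sub]])
    obtain G where G: "\<forall>z. cmod z \<le> r \<longrightarrow> cmod (g z) \<le> G" using cont_cball_bound[OF gc] by blast
    define G' where "G' = max G 0"
    define t where "t = real (mt \<alpha>) + 1 - \<alpha>"
    have tp: "t > 0" unfolding t_def using mt_ge(1)[OF \<alpha>] by simp
    define c0 where "c0 = pochhammer (real (mt \<alpha>)) k / (1 - r) ^ (mt \<alpha> + k) * G'"
    have P0: "pochhammer (real (mt \<alpha>)) k \<ge> 0" by (rule pochhammer_nonneg) (use mt_ge(2)[OF \<alpha>] in simp)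
    have c00: "c0 \<ge> 0" unfolding c0_def G'_def using P0 r1 by simp
    have Xb: "cmod (deriv (Ignk g n k (fs (\<rho> j))) w) \<le> c0 * (2 / (real j + 2)) powr t" for j
    proof -
      define ell where "ell = 1 - cmod (a (\<rho> j)) ^ 2"
      have an: "cmod (a (\<rho> j)) < 1" using a by (simp add: disc_norm)
      have ell0: "ell \<ge> 0" unfolding ell_def using disc_sq[OF an] by simp
      have nn: "0 \<le> ell powr t * pochhammer (real (mt \<alpha>)) k / (1 - r) ^ (mt \<alpha> + k)"
        using P0 r1 by simp
      have ub: "cmod (u j z) \<le> ell powr t * c0" if z: "cmod z \<le> r" for z
      proof -
        have "cmod (u j z) = cmod ((deriv ^^ k) (tf \<alpha> (a (\<rho> j))) z) * cmod (g z)"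
          unfolding u_def by (simp add: norm_mult)
        also have "\<dots> \<le> (ell powr t * pochhammer (real (mt \<alpha>)) k / (1 - r) ^ (mt \<alpha> + k)) * G'"
          using tf_deriv_local[OF a r1 z \<alpha>, of k] G z nn unfolding ell_def t_def G'_def
          by (intro mult_mono) (auto simp: le_max_iff_disj P0)
        also have "\<dots> = ell powr t * c0" unfolding c0_def by simp
        finally show ?thesis .
      qed
      have "cmod ((integ_op ^^ (n - 1)) (u j) w) \<le> ell powr t * c0"
        by (rule iter_local_bound[OF uh r1 ub]) (use c00 in \<open>simp_all add: r_def\<close>)
      also have "ell powr t \<le> (2 / (real j + 2)) powr t"
      proof (rule powr_mono2)
        have "ell \<le> 2 * (1 - cmod (a (\<rho> j)))"
        proof -
          have "(1 - cmod (a (\<rho> j))) * (1 + cmod (a (\<rho> j))) \<le> (1 - cmod (a (\<rho> j))) * 2"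
            by (rule mult_left_mono) (use an in auto)
          then show ?thesis unfolding ell_def by (simp add: power2_eq_square algebra_simps)
        qed
        also have "1 - cmod (a (\<rho> j)) \<le> 1 / (real (\<rho> j) + 2)"
          using ar[of "\<rho> j"] unfolding rr_def by simp
        also have "1 / (real (\<rho> j) + 2) \<le> 1 / (real j + 2)"
          using seq_suble[OF sm, of j] by (simp add: frac_le)
        finally show "ell \<le> 2 / (real j + 2)" by simp
      qed (use tp ell0 in auto)
      then have "ell powr t * c0 \<le> (2 / (real j + 2)) powr t * c0" by (rule mult_right_mono) (rule c00)
      finally show ?thesis using Td[OF w] by (simp add: mult_ac)
    qed
    have X0: "(\<lambda>j. deriv (Ignk g n k (fs (\<rho> j))) w) \<longlonglongrightarrow> 0"
    proof (rule Lim_null_comparison)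
      show "\<forall>\<^sub>F j in sequentially. norm (deriv (Ignk g n k (fs (\<rho> j))) w) \<le> c0 * (2 / (real j + 2)) powr t"
        using Xb by simp
      show "(\<lambda>j. c0 * (2 / (real j + 2)) powr t) \<longlonglongrightarrow> 0"
        using tendsto_mult[OF tendsto_const seq_powr_zero[OF tp], of c0] by simp
    qed
    have wn: "cmod w < 1" using w by (simp add: disc_norm)
    have wpos: "(1 - cmod w ^ 2) powr \<beta> > 0" using disc_sq[OF wn] by simp
    have Dl: "(\<lambda>j. deriv (D j) w) \<longlonglongrightarrow> 0"
    proof (rule Lim_null_comparison)
      show "\<forall>\<^sub>F j in sequentially. norm (deriv (D j) w) \<le> N j / (1 - cmod w ^ 2) powr \<beta>"
        using dD[OF w] wpos by (simp add: field_simps mult.commute)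
      have "(\<lambda>j. N j) \<longlonglongrightarrow> 0" using conv unfolding N_def .
      then show "(\<lambda>j. N j / (1 - cmod w ^ 2) powr \<beta>) \<longlonglongrightarrow> 0"
        using tendsto_divide[OF _ tendsto_const, of N 0 sequentially "(1 - cmod w ^ 2) powr \<beta>"] wpos by simp
    qed
    have "(\<lambda>j. deriv (Ignk g n k (fs (\<rho> j))) w - deriv (D j) w) \<longlonglongrightarrow> 0 - 0"
      by (rule tendsto_diff[OF X0 Dl])
    moreover have "(\<lambda>j. deriv (Ignk g n k (fs (\<rho> j))) w - deriv (D j) w) = (\<lambda>j. deriv h w)"
      using dsplit[OF w] by simp
    ultimately have "(\<lambda>j. deriv h w) \<longlonglongrightarrow> 0" by simp
    then show ?thesis by (simp add: LIMSEQ_const_iff)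
  qed
  have bnd: "cmod ((integ_op ^^ (n - 1)) (\<lambda>z. (deriv ^^ k) (tf \<alpha> (a (\<rho> j))) z * g z) w)
      \<le> (N j * 2 powr \<beta>) * (1 - cmod w) powr (-\<beta>)" if w: "w \<in> unit_disc" for j w
  proof -
    have wn: "cmod w < 1" using w by (simp add: disc_norm)
    have pos: "(1 - cmod w ^ 2) powr \<beta> > 0" using disc_sq[OF wn] by simp
    have e: "deriv (D j) w = (integ_op ^^ (n - 1)) (\<lambda>z. (deriv ^^ k) (tf \<alpha> (a (\<rho> j))) z * g z) w"
      using dsplit[OF w] h0[OF w] Td[OF w] unfolding u_def by simp
    have "cmod (deriv (D j) w) \<le> N j * (1 - cmod w ^ 2) powr (-\<beta>)"
      using dD[OF w] pos by (simp add: powr_minus field_simps)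
    also have "\<dots> \<le> N j * (2 powr \<bar>-\<beta>\<bar> * (1 - cmod w) powr (-\<beta>))"
      by (rule mult_left_mono[OF weight_conv1[OF wn] N0])
    finally show ?thesis unfolding e using \<beta> by (simp add: mult_ac)
  qed
  have \<phi>b: "\<phi> (a (\<rho> j)) \<le> KT \<alpha> \<beta> n k * (N j * 2 powr \<beta>)" for j
    using test_lemma[OF \<alpha> \<beta> n g a ah _ bnd] N0 unfolding \<phi>_def s_def by simp
  have "(\<lambda>j. KT \<alpha> \<beta> n k * (N j * 2 powr \<beta>)) \<longlonglongrightarrow> KT \<alpha> \<beta> n k * (0 * 2 powr \<beta>)"
    using conv unfolding N_def[symmetric] by (intro tendsto_intros)
  then have "(\<lambda>j. KT \<alpha> \<beta> n k * (N j * 2 powr \<beta>)) \<longlonglongrightarrow> 0" by simp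
  then have "\<forall>\<^sub>F j in sequentially. KT \<alpha> \<beta> n k * (N j * 2 powr \<beta>) < \<epsilon>"
    using \<epsilon> by (rule order_tendstoD(2))
  then obtain j where "KT \<alpha> \<beta> n k * (N j * 2 powr \<beta>) < \<epsilon>" using eventually_sequentially by auto
  then show False using \<phi>b[of j] a\<phi>[of "\<rho> j"] by linarith
qed

theorem proposition3p1:
  fixes \<alpha> \<beta> :: real and n k :: nat and g :: "complex \<Rightarrow> complex"
  assumes "\<alpha> > 0" and "\<beta> > 0" and "n > 0" and "0 < k" and "k \<le> n - 1"
    and "g holomorphic_on unit_disc"
  shows "(bounded_bloch_op \<alpha> \<beta> (Ignk g n k) \<longleftrightarrow>
            (\<exists>C. \<forall>z\<in>unit_disc.
               (1 - (cmod z)^2) powr (real n - real k + \<beta> - \<alpha>) * cmod (g z) \<le> C))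
       \<and> (compact_bloch_op \<alpha> \<beta> (Ignk g n k) \<longleftrightarrow>
            (\<forall>\<epsilon>>0. \<exists>r<1. \<forall>z\<in>unit_disc. r < cmod z \<longrightarrow>
               (1 - (cmod z)^2) powr (real n - real k + \<beta> - \<alpha>) * cmod (g z) < \<epsilon>))"
proof -
  have n1: "n \<ge> 1" using assms(3) by simp
  have k1: "k \<ge> 1" using assms(4) by simp
  have i: "bounded_bloch_op \<alpha> \<beta> (Ignk g n k) \<longleftrightarrow>
            (\<exists>C. \<forall>z\<in>unit_disc. (1 - (cmod z)^2) powr (real n - real k + \<beta> - \<alpha>) * cmod (g z) \<le> C)"
  proof
    assume "bounded_bloch_op \<alpha> \<beta> (Ignk g n k)"
    then show "\<exists>C. \<forall>z\<in>unit_disc. (1 - (cmod z)^2) powr (real n - real k + \<beta> - \<alpha>) * cmod (g z) \<le> C"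
      using bounded_nec[OF assms(1,2) n1 k1 assms(6)] by blast
  next
    assume "\<exists>C. \<forall>z\<in>unit_disc. (1 - (cmod z)^2) powr (real n - real k + \<beta> - \<alpha>) * cmod (g z) \<le> C"
    then obtain C where "\<forall>z\<in>unit_disc. (1 - (cmod z)^2) powr (real n - real k + \<beta> - \<alpha>) * cmod (g z) \<le> C"
      by blast
    then show "bounded_bloch_op \<alpha> \<beta> (Ignk g n k)" by (rule bounded_suff[OF assms(1,2) n1 k1 assms(6)])
  qed
  have ii: "compact_bloch_op \<alpha> \<beta> (Ignk g n k) \<longleftrightarrow>
            (\<forall>\<epsilon>>0. \<exists>r<1. \<forall>z\<in>unit_disc. r < cmod z \<longrightarrow>
               (1 - (cmod z)^2) powr (real n - real k + \<beta> - \<alpha>) * cmod (g z) < \<epsilon>)"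
  proof
    assume "compact_bloch_op \<alpha> \<beta> (Ignk g n k)"
    then show "\<forall>\<epsilon>>0. \<exists>r<1. \<forall>z\<in>unit_disc. r < cmod z \<longrightarrow>
               (1 - (cmod z)^2) powr (real n - real k + \<beta> - \<alpha>) * cmod (g z) < \<epsilon>"
      by (rule compact_nec[OF assms(1,2) n1 k1 assms(6)])
  next
    assume "\<forall>\<epsilon>>0. \<exists>r<1. \<forall>z\<in>unit_disc. r < cmod z \<longrightarrow>
               (1 - (cmod z)^2) powr (real n - real k + \<beta> - \<alpha>) * cmod (g z) < \<epsilon>"
    then show "compact_bloch_op \<alpha> \<beta> (Ignk g n k)" by (rule compact_suff[OF assms(1,2) n1 k1 assms(6)])
  qed
  show ?thesis using i ii by blast
qed

end
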